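(* Let $n=0$ and suppose $m^2<r$. Then $\bar{\mathcal{A}}_q=\bar{\mathcal{C}}_q$ and $\operatorname{End}_{\bar{\mathcal{C}}_q}\bar V^{\otimes r}=\operatorname{End}_{\bar{\mathcal{A}}_q}\bar V^{\otimes r}$.
   Context: $q$ indeterminate, $K=\mathbb{Q}(q)$, $\bar K$ an algebraic closure, $r\ge2$. $\mathcal{H}_{\bar K,r}(q)$ is the type $A$ Iwahori–Hecke algebra over $\bar K$ (generators $T_1,\dots,T_{r-1}$, $T_i^2=(q-q^{-1})T_i+1$, braid relations); the Goldman involution is the algebra automorphism with $\hat T_i=(q-q^{-1})-T_i$, and $\mathcal{H}^1_{\bar K,r}(q)=\{X:\hat X=X\}$. $\bar V$ is the $\bar K$-space with basis $v_1,\dots,v_m$ (all of even degree, $n=0$). $\pi_r$ is the $q$-permutation representation on $\bar V^{\otimes r}$: $\pi_r(T_i)=\mathrm{Id}^{\otimes i-1}\otimes T\otimes\mathrm{Id}^{\otimes r-i-1}$ with $T(v_k\otimes v_k)=q\,v_k\otimes v_k$, $T(v_k\otimes v_l)=v_l\otimes v_k+(q-q^{-1})v_k\otimes v_l$ for $k<l$, $T(v_k\otimes v_l)=v_l\otimes v_k$ for $k>l$. $\bar{\mathcal{A}}_q=\pi_r(\mathcal{H}_{\bar K,r}(q))$, $\bar{\mathcal{C}}_q=\pi_r(\mathcal{H}^1_{\bar K,r}(q))$. *)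

theory Defs
  imports "HOL-Computational_Algebra.Polynomial"
begin

definition alg_closed_field :: "'k::field itself \<Rightarrow> bool" where
  "alg_closed_field _ \<longleftrightarrow> (\<forall>p :: 'k poly. degree p > 0 \<longrightarrow> (\<exists>x. poly p x = 0))"

definition transcendental_over_Q :: "'k::field_char_0 \<Rightarrow> bool" where
  "transcendental_over_Q q \<longleftrightarrow> (\<forall>p :: rat poly. p \<noteq> 0 \<longrightarrow> poly (map_poly of_rat p) q \<noteq> 0)"

definition ratfun_field :: "'k::field_char_0 \<Rightarrow> 'k set" where
  "ratfun_field q = {poly (map_poly of_rat a) q / poly (map_poly of_rat b) q | a b :: rat poly.
                      poly (map_poly of_rat b) q \<noteq> 0}"

definition algebraic_over_ratfun :: "'k::field_char_0 \<Rightarrow> 'k \<Rightarrow> bool" where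
  "algebraic_over_ratfun q x \<longleftrightarrow>
     (\<exists>p :: 'k poly. p \<noteq> 0 \<and> (\<forall>i. coeff p i \<in> ratfun_field q) \<and> poly p x = 0)"

definition is_alg_closure_of_Qq :: "'k::field_char_0 \<Rightarrow> bool" where
  "is_alg_closure_of_Qq q \<longleftrightarrow> alg_closed_field TYPE('k) \<and> transcendental_over_Q q
     \<and> (\<forall>x. algebraic_over_ratfun q x)"

datatype 'k hexp = HC 'k | HT nat | HAdd "'k hexp" "'k hexp" | HMul "'k hexp" "'k hexp"

text \<open>Equality in the Hecke algebra H_r(q): the congruence generated by the axioms of an
  associative 'k-algebra (scalars central) and the defining relations; generators T_i with
  i outside 1..r-1 are identified with 0 (i.e. they do not exist).\<close>
inductive heq :: "nat \<Rightarrow> 'k::field \<Rightarrow> 'k hexp \<Rightarrow> 'k hexp \<Rightarrow> bool" for r q where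
  h_refl: "heq r q a a"
| h_sym: "heq r q a b \<Longrightarrow> heq r q b a"
| h_trans: "heq r q a b \<Longrightarrow> heq r q b c \<Longrightarrow> heq r q a c"
| h_add_cong: "heq r q a a' \<Longrightarrow> heq r q b b' \<Longrightarrow> heq r q (HAdd a b) (HAdd a' b')"
| h_mul_cong: "heq r q a a' \<Longrightarrow> heq r q b b' \<Longrightarrow> heq r q (HMul a b) (HMul a' b')"
| h_add_assoc: "heq r q (HAdd (HAdd a b) c) (HAdd a (HAdd b c))"
| h_add_comm: "heq r q (HAdd a b) (HAdd b a)"
| h_add_zero: "heq r q (HAdd a (HC 0)) a"
| h_add_inv: "heq r q (HAdd a (HMul (HC (-1)) a)) (HC 0)"
| h_mul_assoc: "heq r q (HMul (HMul a b) c) (HMul a (HMul b c))"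
| h_mul_one_l: "heq r q (HMul (HC 1) a) a"
| h_mul_one_r: "heq r q (HMul a (HC 1)) a"
| h_distrib_l: "heq r q (HMul a (HAdd b c)) (HAdd (HMul a b) (HMul a c))"
| h_distrib_r: "heq r q (HMul (HAdd a b) c) (HAdd (HMul a c) (HMul b c))"
| h_const_add: "heq r q (HAdd (HC x) (HC y)) (HC (x + y))"
| h_const_mul: "heq r q (HMul (HC x) (HC y)) (HC (x * y))"
| h_const_central: "heq r q (HMul (HC x) a) (HMul a (HC x))"
| h_quad: "1 \<le> i \<Longrightarrow> i < r \<Longrightarrow>
     heq r q (HMul (HT i) (HT i)) (HAdd (HMul (HC (q - inverse q)) (HT i)) (HC 1))"
| h_braid: "1 \<le> i \<Longrightarrow> i + 1 < r \<Longrightarrow>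
     heq r q (HMul (HT i) (HMul (HT (i+1)) (HT i))) (HMul (HT (i+1)) (HMul (HT i) (HT (i+1))))"
| h_comm: "1 \<le> i \<Longrightarrow> i + 1 < j \<Longrightarrow> j < r \<Longrightarrow>
     heq r q (HMul (HT i) (HT j)) (HMul (HT j) (HT i))"
| h_nogen: "i = 0 \<or> r \<le> i \<Longrightarrow> heq r q (HT i) (HC 0)"

fun goldman :: "nat \<Rightarrow> 'k::field \<Rightarrow> 'k hexp \<Rightarrow> 'k hexp" where
  "goldman r q (HC c) = HC c"
| "goldman r q (HT i) = (if 1 \<le> i \<and> i < r
       then HAdd (HC (q - inverse q)) (HMul (HC (-1)) (HT i)) else HT i)"
| "goldman r q (HAdd a b) = HAdd (goldman r q a) (goldman r q b)"
| "goldman r q (HMul a b) = HMul (goldman r q a) (goldman r q b)"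

text \<open>Basis of V^{\<otimes> r}: v_{xs!0} \<otimes> ... \<otimes> v_{xs!(r-1)}, with indices 0..m-1
  (index k stands for v_{k+1}). Linear endomorphisms are matrices M a b
  (coefficient of basis vector a in the image of basis vector b), vanishing off the index set.\<close>
definition tidx :: "nat \<Rightarrow> nat \<Rightarrow> nat list set" where
  "tidx r m = {xs. set xs \<subseteq> {..<m} \<and> length xs = r}"

type_synonym 'k tmat = "nat list \<Rightarrow> nat list \<Rightarrow> 'k"

definition tsupp :: "nat \<Rightarrow> nat \<Rightarrow> 'k::zero tmat \<Rightarrow> bool" where
  "tsupp r m M \<longleftrightarrow> (\<forall>a b. a \<notin> tidx r m \<or> b \<notin> tidx r m \<longrightarrow> M a b = 0)"

definition tmul :: "nat \<Rightarrow> nat \<Rightarrow> 'k::comm_ring_1 tmat \<Rightarrow> 'k tmat \<Rightarrow> 'k tmat" where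
  "tmul r m M N = (\<lambda>a b. \<Sum>c\<in>tidx r m. M a c * N c b)"

definition tid :: "nat \<Rightarrow> nat \<Rightarrow> 'k::comm_ring_1 tmat" where
  "tid r m = (\<lambda>a b. if a = b \<and> a \<in> tidx r m then 1 else 0)"

definition swap_at :: "nat \<Rightarrow> nat list \<Rightarrow> nat list" where
  "swap_at i xs = xs[i - 1 := xs ! i, i := xs ! (i - 1)]"

text \<open>pi_r(T_i) = Id^{i-1} \<otimes> T \<otimes> Id^{r-i-1}, acting on tensor slots i and i+1
  (list positions i-1 and i).\<close>
definition Tmat :: "nat \<Rightarrow> nat \<Rightarrow> 'k::field \<Rightarrow> nat \<Rightarrow> 'k tmat" where
  "Tmat r m q i = (\<lambda>a b.
     if a \<in> tidx r m \<and> b \<in> tidx r m then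
       (let k = b ! (i - 1); l = b ! i in
        if k = l then (if a = b then q else 0)
        else if k < l then (if a = swap_at i b then 1 else 0) + (if a = b then q - inverse q else 0)
        else (if a = swap_at i b then 1 else 0))
     else 0)"

text \<open>The representation pi_r on expressions (well defined on H since relations hold).\<close>
fun pi_r :: "nat \<Rightarrow> nat \<Rightarrow> 'k::field \<Rightarrow> 'k hexp \<Rightarrow> 'k tmat" where
  "pi_r r m q (HC c) = (\<lambda>a b. c * tid r m a b)"
| "pi_r r m q (HT i) = (if 1 \<le> i \<and> i < r then Tmat r m q i else (\<lambda>a b. 0))"
| "pi_r r m q (HAdd x y) = (\<lambda>a b. pi_r r m q x a b + pi_r r m q y a b)"
| "pi_r r m q (HMul x y) = tmul r m (pi_r r m q x) (pi_r r m q y)"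

definition A_q :: "nat \<Rightarrow> nat \<Rightarrow> 'k::field \<Rightarrow> 'k tmat set" where
  "A_q r m q = range (pi_r r m q)"

definition C_q :: "nat \<Rightarrow> nat \<Rightarrow> 'k::field \<Rightarrow> 'k tmat set" where
  "C_q r m q = pi_r r m q ` {X. heq r q (goldman r q X) X}"

definition End_comm :: "nat \<Rightarrow> nat \<Rightarrow> 'k::field tmat set \<Rightarrow> 'k tmat set" where
  "End_comm r m S = {M. tsupp r m M \<and> (\<forall>X\<in>S. tmul r m M X = tmul r m X M)}"

end

theory Submission
  imports Defs "Jordan_Normal_Form.Char_Poly"
begin


definition peval :: "'a::comm_ring_1 poly \<Rightarrow> 'a mat \<Rightarrow> 'a mat" where
  "peval p A = foldr (\<lambda>a acc. a \<cdot>\<^sub>m 1\<^sub>m (dim_row A) + A * acc) (coeffs p) (0\<^sub>m (dim_row A) (dim_row A))"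

lemma peval_foldr_carrier:
  assumes A: "A \<in> carrier_mat n n"
  shows "foldr (\<lambda>a acc. a \<cdot>\<^sub>m 1\<^sub>m (dim_row A) + A * acc) xs (0\<^sub>m (dim_row A) (dim_row A)) \<in> carrier_mat n n"
  using A by (induction xs) auto

lemma peval_foldr_dims:
  "dim_row (foldr (\<lambda>a acc. a \<cdot>\<^sub>m 1\<^sub>m (dim_row A) + A * acc) xs (0\<^sub>m (dim_row A) (dim_row A))) = dim_row A \<and>
   dim_col (foldr (\<lambda>a acc. a \<cdot>\<^sub>m 1\<^sub>m (dim_row A) + A * acc) xs (0\<^sub>m (dim_row A) (dim_row A))) = dim_row A"
  by (induction xs) auto

lemma peval_dims[simp]: "dim_row (peval p A) = dim_row A" "dim_col (peval p A) = dim_row A"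
  unfolding peval_def using peval_foldr_dims by blast+

lemma peval_carrier[simp]: "A \<in> carrier_mat n n \<Longrightarrow> peval p A \<in> carrier_mat n n"
  unfolding peval_def by (rule peval_foldr_carrier)

lemma peval_0[simp]: "A \<in> carrier_mat n n \<Longrightarrow> peval 0 A = 0\<^sub>m n n"
  unfolding peval_def by auto

lemma peval_pCons:
  assumes A: "A \<in> carrier_mat n n"
  shows "peval (pCons a p) A = a \<cdot>\<^sub>m 1\<^sub>m n + A * peval p A"
proof (cases "a = 0 \<and> p = 0")
  case True
  then show ?thesis using A by (auto simp: peval_def)
next
  case False
  then have "coeffs (pCons a p) = a # coeffs p"
    by (auto simp: cCons_def)
  then show ?thesis using A unfolding peval_def by auto
qed

lemma peval_const: "A \<in> carrier_mat n n \<Longrightarrow> peval [:c:] A = c \<cdot>\<^sub>m 1\<^sub>m n"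
  by (simp add: peval_pCons)

lemma peval_add:
  assumes A: "A \<in> carrier_mat n n"
  shows "peval (p + q) A = peval p A + peval q A"
proof (induction p arbitrary: q rule: pCons_induct)
  case 0
  then show ?case using A by simp
next
  case (pCons a p)
  show ?case
  proof (cases q rule: pCons_cases)
    case (pCons b q')
    have "peval (pCons a p + q) A = peval (pCons (a+b) (p + q')) A" using pCons by simp
    also have "\<dots> = (a+b) \<cdot>\<^sub>m 1\<^sub>m n + A * (peval p A + peval q' A)"
      using A pCons.IH by (simp add: peval_pCons)
    also have "\<dots> = (a \<cdot>\<^sub>m 1\<^sub>m n + A * peval p A) + (b \<cdot>\<^sub>m 1\<^sub>m n + A * peval q' A)"
      using A by (simp add: mult_add_distrib_mat[OF A peval_carrier[OF A] peval_carrier[OF A]], intro eq_matI, auto simp: algebra_simps)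
    finally show ?thesis using A pCons by (simp add: peval_pCons)
  qed
qed

lemma peval_smult:
  assumes A: "A \<in> carrier_mat n n"
  shows "peval (Polynomial.smult c p) A = c \<cdot>\<^sub>m peval p A"
proof (induction p rule: pCons_induct)
  case 0
  then show ?case using A by simp
next
  case (pCons a p)
  then show ?case using A
    by (simp add: peval_pCons add_smult_distrib_left_mat[of _ n n] mult_smult_distrib[OF A peval_carrier[OF A]]
        , intro eq_matI, auto simp: algebra_simps)
qed

lemma zero_smult_one_add: "X \<in> carrier_mat n n \<Longrightarrow> (0::'a::comm_ring_1) \<cdot>\<^sub>m 1\<^sub>m n + X = X"
  by (rule eq_matI) auto

lemma peval_monom1:
  assumes A: "A \<in> carrier_mat n n"
  shows "peval (pCons 0 p) A = A * peval p A"
  using A by (simp add: peval_pCons zero_smult_one_add)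

lemma peval_commute:
  assumes A: "A \<in> carrier_mat n n"
  shows "A * peval p A = peval p A * A"
proof (induction p rule: pCons_induct)
  case 0
  then show ?case using A by (simp add: left_mult_zero_mat right_mult_zero_mat)
next
  case (pCons a p)
  have P: "peval p A \<in> carrier_mat n n" using A by simp
  have "A * peval (pCons a p) A = A * (a \<cdot>\<^sub>m 1\<^sub>m n) + A * (A * peval p A)"
    using A P by (simp add: peval_pCons mult_add_distrib_mat[OF A smult_carrier_mat[OF one_carrier_mat] mult_carrier_mat[OF A P]])
  also have "A * (a \<cdot>\<^sub>m 1\<^sub>m n) = a \<cdot>\<^sub>m A" using A by (simp add: mult_smult_distrib[OF A one_carrier_mat])
  finally have "A * peval (pCons a p) A = a \<cdot>\<^sub>m A + A * (A * peval p A)" .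
  also have "\<dots> = a \<cdot>\<^sub>m A + A * (peval p A * A)" using pCons by simp
  also have "\<dots> = (a \<cdot>\<^sub>m 1\<^sub>m n) * A + (A * peval p A) * A"
    using A P by (simp add: mult_smult_assoc_mat[OF one_carrier_mat A] assoc_mult_mat[OF A P A])
  also have "\<dots> = peval (pCons a p) A * A"
    using A P by (simp add: peval_pCons add_mult_distrib_mat[OF smult_carrier_mat[OF one_carrier_mat] mult_carrier_mat[OF A P] A])
  finally show ?case .
qed

lemma peval_mult:
  assumes A: "A \<in> carrier_mat n n"
  shows "peval (p * q) A = peval p A * peval q A"
proof (induction p rule: pCons_induct)
  case 0
  then show ?case using A by (simp add: left_mult_zero_mat[OF peval_carrier[OF A]])
next
  case (pCons a p)
  have "pCons a p * q = Polynomial.smult a q + pCons 0 (p * q)" by simp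
  then have "peval (pCons a p * q) A = a \<cdot>\<^sub>m peval q A + A * (peval p A * peval q A)"
    using A pCons by (simp add: peval_add peval_smult peval_monom1)
  also have "\<dots> = (a \<cdot>\<^sub>m 1\<^sub>m n) * peval q A + (A * peval p A) * peval q A"
    using A by (simp add: mult_smult_assoc_mat[OF one_carrier_mat peval_carrier[OF A]] 
        assoc_mult_mat[OF A peval_carrier[OF A] peval_carrier[OF A]])
  also have "\<dots> = peval (pCons a p) A * peval q A"
    using A by (simp add: peval_pCons add_mult_distrib_mat[OF smult_carrier_mat[OF one_carrier_mat] mult_carrier_mat[OF A peval_carrier[OF A]] peval_carrier[OF A]])
  finally show ?case .
qed

lemma (in comm_ring_hom) mat_hom_add':
  "X \<in> carrier_mat n k \<Longrightarrow> Y \<in> carrier_mat n k \<Longrightarrow> map_mat hom (X+Y) = map_mat hom X + map_mat hom Y"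
  by (intro eq_matI) (auto simp: hom_add)

lemma (in comm_ring_hom) mat_hom_smult_one:
  "map_mat hom (a \<cdot>\<^sub>m 1\<^sub>m n) = hom a \<cdot>\<^sub>m 1\<^sub>m n"
  by (intro eq_matI) auto

lemma (in comm_ring_hom) peval_hom:
  assumes A: "A \<in> carrier_mat n n"
  shows "map_mat hom (peval p A) = peval (map_poly hom p) (map_mat hom A)"
proof (induction p rule: pCons_induct)
  case 0
  then show ?case using A by (intro eq_matI) auto
next
  case (pCons a p)
  have mA: "map_mat hom A \<in> carrier_mat n n" using A by simp
  have "map_poly hom (pCons a p) = pCons (hom a) (map_poly hom p)"
    by (cases "a = 0 \<and> p = 0") (auto simp: map_poly_pCons)
  then show ?case using A mA pCons
    by (simp add: peval_pCons mat_hom_add'[of _ n n] mat_hom_mult[OF A peval_carrier[OF A]] mat_hom_smult_one)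
qed




lemma poly_shift_pCons: "poly_shift j p = pCons (coeff p j) (poly_shift (Suc j) p)"
  by (simp add: poly_eq_iff coeff_poly_shift coeff_pCons split: nat.split)

lemma coeff_charmat_mult:
  fixes P :: "'a::comm_ring_1 poly"
  shows "coeff (((if i = l then [:0,1:] else 0) + [:- a:]) * P) k =
     (if i = l then (case k of 0 \<Rightarrow> 0 | Suc k' \<Rightarrow> coeff P k') else 0) - a * coeff P k"
  by (cases k) (auto simp: algebra_simps coeff_pCons)

theorem cayley_hamilton:
  fixes A :: "'a::comm_ring_1 mat"
  assumes A: "A \<in> carrier_mat n n"
  shows "peval (char_poly A) A = 0\<^sub>m n n"
proof -
  define C where "C = char_poly_matrix A"
  define Adj where "Adj = adj_mat C"
  have C: "C \<in> carrier_mat n n" using A by (simp add: C_def)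
  have Adj: "Adj \<in> carrier_mat n n" using adj_mat(1)[OF C] Adj_def by simp
  have CA: "C * Adj = char_poly A \<cdot>\<^sub>m 1\<^sub>m n"
    using adj_mat(2)[OF C] by (simp add: Adj_def char_poly_def C_def)
  define Ck where "Ck k = mat n n (\<lambda>(i,j). coeff (Adj $$ (i,j)) k)" for k
  define c where "c k = coeff (char_poly A) k" for k
  have Ck: "Ck k \<in> carrier_mat n n" for k by (simp add: Ck_def)
  have key: "coeff ((C * Adj) $$ (i,j)) k =
      (case k of 0 \<Rightarrow> 0 | Suc k' \<Rightarrow> Ck k' $$ (i,j)) - (A * Ck k) $$ (i,j)"
    if ij: "i<n" "j<n" for i j k
  proof -
    have "(C * Adj) $$ (i,j) = (\<Sum>l<n. C $$ (i,l) * Adj $$ (l,j))"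
      using C Adj ij by (simp add: scalar_prod_def lessThan_atLeast0)
    also have "\<dots> = (\<Sum>l<n. ((if i = l then [:0,1:] else 0) + [:- A $$ (i,l):]) * Adj $$ (l,j))"
    proof (intro sum.cong refl)
      fix l assume "l \<in> {..<n}"
      then show "C $$ (i,l) * Adj $$ (l,j) = ((if i = l then [:0,1:] else 0) + [:- A $$ (i,l):]) * Adj $$ (l,j)"
        using A ij by (simp add: char_poly_matrix_def C_def)
    qed
    finally have e1: "(C * Adj) $$ (i,j) = (\<Sum>l<n. ((if i = l then [:0,1:] else 0) + [:- A $$ (i,l):]) * Adj $$ (l,j))" .
    have "coeff (\<Sum>l<n. ((if i = l then [:0,1:] else 0) + [:- A $$ (i,l):]) * Adj $$ (l,j)) k =
       (\<Sum>l<n. (if i = l then (case k of 0 \<Rightarrow> 0 | Suc k' \<Rightarrow> coeff (Adj $$ (l,j)) k') else 0)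
           - A $$ (i,l) * coeff (Adj $$ (l,j)) k)"
      unfolding coeff_sum by (simp only: coeff_charmat_mult)
    then have "coeff ((C * Adj) $$ (i,j)) k =
       (\<Sum>l<n. (if i = l then (case k of 0 \<Rightarrow> 0 | Suc k' \<Rightarrow> coeff (Adj $$ (l,j)) k') else 0)
           - A $$ (i,l) * coeff (Adj $$ (l,j)) k)" using e1 by simp
    also have "\<dots> = (case k of 0 \<Rightarrow> 0 | Suc k' \<Rightarrow> coeff (Adj $$ (i,j)) k')
           - (\<Sum>l<n. A $$ (i,l) * coeff (Adj $$ (l,j)) k)"
      using ij by (simp add: sum_subtractf)
    also have "(\<Sum>l<n. A $$ (i,l) * coeff (Adj $$ (l,j)) k) = (A * Ck k) $$ (i,j)"
      using A ij by (simp add: scalar_prod_def Ck_def atLeast0LessThan)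
    finally show ?thesis using ij by (simp add: Ck_def split: nat.split)
  qed
  have rhs: "coeff ((char_poly A \<cdot>\<^sub>m 1\<^sub>m n) $$ (i,j)) k = (if i = j then c k else 0)"
    if "i<n" "j<n" for i j k using that by (simp add: c_def)
  have rel0: "c 0 \<cdot>\<^sub>m 1\<^sub>m n + A * Ck 0 = 0\<^sub>m n n"
  proof (rule eq_matI)
    fix i j assume ij: "i < dim_row (0\<^sub>m n n :: 'a mat)" "j < dim_col (0\<^sub>m n n :: 'a mat)"
    then have ij': "i<n" "j<n" by auto
    have "coeff ((C * Adj) $$ (i,j)) 0 = (if i = j then c 0 else 0)" using CA rhs[OF ij'] by simp
    then show "(c 0 \<cdot>\<^sub>m 1\<^sub>m n + A * Ck 0) $$ (i, j) = 0\<^sub>m n n $$ (i, j)"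
      using key[OF ij', of 0] ij' A Ck[of 0] by (simp split: if_splits, metis add.left_inverse)
  qed (use A Ck in auto)
  have relS: "Ck k = c (Suc k) \<cdot>\<^sub>m 1\<^sub>m n + A * Ck (Suc k)" for k
  proof (rule eq_matI)
    fix i j assume ij: "i < dim_row (c (Suc k) \<cdot>\<^sub>m 1\<^sub>m n + A * Ck (Suc k))"
      "j < dim_col (c (Suc k) \<cdot>\<^sub>m 1\<^sub>m n + A * Ck (Suc k))"
    then have ij': "i<n" "j<n" using A Ck[of "Suc k"] by auto
    have "coeff ((C * Adj) $$ (i,j)) (Suc k) = (if i = j then c (Suc k) else 0)" using CA rhs[OF ij'] by simp
    then show "Ck k $$ (i, j) = (c (Suc k) \<cdot>\<^sub>m 1\<^sub>m n + A * Ck (Suc k)) $$ (i, j)"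
      using key[OF ij', of "Suc k"] ij' A Ck[of "Suc k"] by (simp split: if_splits, metis diff_add_cancel add.commute)
  qed (use A in \<open>auto simp: Ck_def\<close>)
  define D where "D = degree (char_poly A) + (\<Sum>i<n. \<Sum>j<n. degree (Adj $$ (i,j)))"
  have degle: "degree (Adj $$ (i,j)) \<le> D" if "i<n" "j<n" for i j
  proof -
    have "degree (Adj $$ (i,j)) \<le> (\<Sum>j<n. degree (Adj $$ (i,j)))"
      using that by (intro member_le_sum) auto
    also have "\<dots> \<le> (\<Sum>i<n. \<Sum>j<n. degree (Adj $$ (i,j)))"
      using that by (intro member_le_sum[of i "{..<n}" "\<lambda>i. \<Sum>j<n. degree (Adj $$ (i,j))"]) auto
    finally show ?thesis unfolding D_def by simp
  qed
  have CkD: "Ck (Suc D) = 0\<^sub>m n n"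
    by (rule eq_matI) (auto simp: Ck_def intro!: coeff_eq_0 dest: degle)
  have shiftD: "poly_shift (D+2) (char_poly A) = 0"
    by (simp add: poly_eq_iff coeff_poly_shift D_def coeff_eq_0)
  have P: "peval (poly_shift j (char_poly A)) A = Ck (j - 1)" if "1 \<le> j" "j \<le> D+2" for j
    using that(2,1)
  proof (induction j rule: inc_induct)
    case base
    then show ?case using A CkD shiftD by simp
  next
    case (step j)
    have "peval (poly_shift j (char_poly A)) A = c j \<cdot>\<^sub>m 1\<^sub>m n + A * peval (poly_shift (Suc j) (char_poly A)) A"
      using A by (subst poly_shift_pCons) (simp add: peval_pCons c_def)
    also have "\<dots> = c j \<cdot>\<^sub>m 1\<^sub>m n + A * Ck j" using step by simp
    also have "\<dots> = Ck (j - 1)" using relS[of "j-1"] step by simp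
    finally show ?case .
  qed
  have "peval (char_poly A) A = c 0 \<cdot>\<^sub>m 1\<^sub>m n + A * peval (poly_shift 1 (char_poly A)) A"
    using A by (subst poly_shift_pCons[of 0, simplified]) (simp add: peval_pCons c_def)
  also have "\<dots> = 0\<^sub>m n n" using P[of 1] rel0 by simp
  finally show ?thesis .
qed


lemma det_uminus_mat: fixes A :: "'a::comm_ring_1 mat"
  assumes A: "A \<in> carrier_mat n n" shows "det (- A) = (-1)^n * det A"
proof -
  have "- A = (-1) \<cdot>\<^sub>m A" using A by (intro eq_matI) auto
  then show ?thesis using A by simp
qed

lemma peval_inverse:
  fixes A :: "'a::field mat"
  assumes A: "A \<in> carrier_mat n n" and d: "det A \<noteq> 0"
  shows "\<exists>s. A * peval s A = 1\<^sub>m n"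
proof -
  define c0 where "c0 = coeff (char_poly A) 0"
  define P where "P = peval (poly_shift 1 (char_poly A)) A"
  have P: "P \<in> carrier_mat n n" using A by (simp add: P_def)
  have "peval (char_poly A) A = c0 \<cdot>\<^sub>m 1\<^sub>m n + A * P"
    using A unfolding P_def c0_def by (subst poly_shift_pCons[of 0, simplified]) (simp add: peval_pCons)
  then have e: "c0 \<cdot>\<^sub>m 1\<^sub>m n + A * P = 0\<^sub>m n n" using cayley_hamilton[OF A] by simp
  have "c0 = poly (char_poly A) 0" by (simp add: c0_def poly_0_coeff_0)
  also have "\<dots> = det (- A)"
  proof -
    have "A + 0 \<cdot>\<^sub>m 1\<^sub>m n = A" using A by (intro eq_matI) auto
    then show ?thesis using char_poly_matrix[OF A, of 0] A by (simp add: char_matrix_def)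
  qed
  also have "\<dots> = (-1)^n * det A" by (rule det_uminus_mat[OF A])
  finally have c0: "c0 \<noteq> 0" using d by simp
  have AP: "(A * P) $$ (i,j) = - (c0 * (if i = j then 1 else 0))" if "i<n" "j<n" for i j
  proof -
    have "(c0 \<cdot>\<^sub>m 1\<^sub>m n + A * P) $$ (i,j) = 0" using e that by simp
    then show ?thesis using that A P by (simp split: if_splits add: eq_neg_iff_add_eq_0 add.commute)
  qed
  have "A * peval (Polynomial.smult (- 1 / c0) (poly_shift 1 (char_poly A))) A = 1\<^sub>m n"
  proof -
    have "A * peval (Polynomial.smult (- 1 / c0) (poly_shift 1 (char_poly A))) A = (- 1 / c0) \<cdot>\<^sub>m (A * P)"
      unfolding P_def peval_smult[OF A] by (rule mult_smult_distrib[OF A peval_carrier[OF A]])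
    also have "\<dots> = 1\<^sub>m n"
      using A P AP c0 by (intro eq_matI) auto
    finally show ?thesis .
  qed
  then show ?thesis by blast
qed



lemma eigenvalue_neg:
  fixes A :: "'a::field mat"
  assumes A: "A \<in> carrier_mat n n" and ev: "eigenvalue (- A) a"
  shows "eigenvalue A (- a)"
proof -
  from ev obtain v where v: "v \<in> carrier_vec n" "v \<noteq> 0\<^sub>v n" "(- A) *\<^sub>v v = a \<cdot>\<^sub>v v"
    using A unfolding eigenvalue_def eigenvector_def by auto
  have "A *\<^sub>v v = (- a) \<cdot>\<^sub>v v"
  proof (rule eq_vecI)
    fix i assume "i < dim_vec ((- a) \<cdot>\<^sub>v v)"
    then have i: "i < n" using v by simp
    have "((- A) *\<^sub>v v) $ i = (a \<cdot>\<^sub>v v) $ i" using v(3) by (rule arg_cong)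
    moreover have "((- A) *\<^sub>v v) $ i = - ((A *\<^sub>v v) $ i)"
      using A v(1) i by (simp add: scalar_prod_def sum_negf[symmetric])
    ultimately have "(A *\<^sub>v v) $ i = - ((a \<cdot>\<^sub>v v) $ i)" by (metis minus_minus)
    then show "(A *\<^sub>v v) $ i = ((- a) \<cdot>\<^sub>v v) $ i" using i v by simp
  qed (use A v in auto)
  then show ?thesis using v A unfolding eigenvalue_def eigenvector_def by auto
qed

lemma peval_linear:
  fixes A :: "'a::field mat"
  assumes A: "A \<in> carrier_mat n n"
  shows "peval [:- a, 1:] A = char_matrix A a"
  using A by (simp add: peval_pCons char_matrix_def, intro eq_matI, auto)

lemma peval_one: "A \<in> carrier_mat n n \<Longrightarrow> peval 1 A = 1\<^sub>m n"
  using peval_const[of A n 1] by (simp add: one_pCons[symmetric], intro eq_matI, auto)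

lemma det_peval_prod_nonzero:
  fixes A :: "'a::field mat"
  assumes A: "A \<in> carrier_mat n n" and nz: "\<forall>a\<in>set as. \<not> eigenvalue A a"
  shows "det (peval (\<Prod>a\<leftarrow>as. [:- a, 1:]) A) \<noteq> 0"
  using nz
proof (induction as)
  case Nil
  then show ?case using A by (simp add: peval_one)
next
  case (Cons a as)
  have "peval ((\<Prod>a\<leftarrow>a # as. [:- a, 1:])) A = peval [:- a, 1:] A * peval (\<Prod>a\<leftarrow>as. [:- a, 1:]) A"
    by (simp only: list.map prod_list.Cons peval_mult[OF A])
  then have "det (peval ((\<Prod>a\<leftarrow>a # as. [:- a, 1:])) A) =
        det (char_matrix A a) * det (peval (\<Prod>a\<leftarrow>as. [:- a, 1:]) A)"
    using A by (simp add: peval_linear det_mult[OF char_matrix_closed[OF A] peval_carrier[OF A]])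
  moreover have "det (char_matrix A a) \<noteq> 0" using Cons.prems eigenvalue_det[OF A] by auto
  ultimately show ?case using Cons by auto
qed

lemma det_char_neg_nonzero:
  fixes A :: "complex mat"
  assumes A: "A \<in> carrier_mat n n" and pos: "\<And>\<mu>. eigenvalue A \<mu> \<Longrightarrow> Re \<mu> > 0"
  shows "det (peval (char_poly (- A)) A) \<noteq> 0"
proof -
  have nA: "- A \<in> carrier_mat n n" using A by simp
  obtain as where as: "char_poly (- A) = (\<Prod>a\<leftarrow>as. [:- a, 1:])"
    using char_poly_factorized[OF nA] by blast
  have "\<not> eigenvalue A a" if "a \<in> set as" for a
  proof
    assume ev: "eigenvalue A a"
    have "poly (char_poly (- A)) a = 0" using that unfolding as
      by (simp add: poly_prod_list prod_list_zero_iff)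
    then have "eigenvalue (- A) a" using eigenvalue_root_char_poly[OF nA] by simp
    then have "eigenvalue A (- a)" by (rule eigenvalue_neg[OF A])
    then show False using pos[OF ev] pos[of "- a"] by simp
  qed
  then show ?thesis unfolding as by (intro det_peval_prod_nonzero[OF A]) auto
qed



definition Lst :: "nat \<Rightarrow> nat \<Rightarrow> nat list list" where
  "Lst r m = List.n_lists r [0..<m]"

definition NN :: "nat \<Rightarrow> nat \<Rightarrow> nat" where "NN r m = length (Lst r m)"

lemma set_Lst: "set (Lst r m) = tidx r m"
  by (auto simp: Lst_def tidx_def set_n_lists)

lemma distinct_Lst: "distinct (Lst r m)"
  by (simp add: Lst_def distinct_n_lists)

lemma Lst_in: "i < NN r m \<Longrightarrow> Lst r m ! i \<in> tidx r m"
  using set_Lst NN_def by (metis nth_mem)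

lemma Lst_inj: "i < NN r m \<Longrightarrow> j < NN r m \<Longrightarrow> (Lst r m ! i = Lst r m ! j) = (i = j)"
  using distinct_Lst NN_def by (metis nth_eq_iff_index_eq)

lemma sum_tidx: "(\<Sum>c\<in>tidx r m. f c) = (\<Sum>k<NN r m. f (Lst r m ! k))"
proof -
  have "bij_betw ((!) (Lst r m)) {..<NN r m} (tidx r m)"
    using bij_betw_nth[OF distinct_Lst] set_Lst NN_def by (metis lessThan_def)
  then show ?thesis by (simp add: sum.reindex_bij_betw[symmetric])
qed

lemma tidx_ex: "a \<in> tidx r m \<Longrightarrow> \<exists>i<NN r m. Lst r m ! i = a"
  using set_Lst NN_def by (metis in_set_conv_nth)

definition toM :: "nat \<Rightarrow> nat \<Rightarrow> 'a tmat \<Rightarrow> 'a mat" where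
  "toM r m F = mat (NN r m) (NN r m) (\<lambda>(i,j). F (Lst r m ! i) (Lst r m ! j))"

lemma toM_carrier[simp]: "toM r m F \<in> carrier_mat (NN r m) (NN r m)"
  by (simp add: toM_def)

lemma toM_dims[simp]: "dim_row (toM r m F) = NN r m" "dim_col (toM r m F) = NN r m"
  by (simp_all add: toM_def)

lemma toM_index[simp]: "i < NN r m \<Longrightarrow> j < NN r m \<Longrightarrow> toM r m F $$ (i,j) = F (Lst r m ! i) (Lst r m ! j)"
  by (simp add: toM_def)

lemma toM_tmul: "toM r m (tmul r m F G) = toM r m F * toM r m G"
  by (rule eq_matI) (auto simp: tmul_def sum_tidx scalar_prod_def atLeast0LessThan)

lemma toM_tid: "toM r m (tid r m) = (1\<^sub>m (NN r m) :: 'a::comm_ring_1 mat)"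
  by (rule eq_matI) (auto simp: tid_def Lst_inj Lst_in)

lemma toM_add: "toM r m (\<lambda>a b. F a b + G a b) = toM r m F + toM r m G"
  by (rule eq_matI) auto

lemma toM_smult: "toM r m (\<lambda>a b. c * F a b) = c \<cdot>\<^sub>m toM r m F"
  by (rule eq_matI) auto

lemma toM_zero: "toM r m (\<lambda>a b. 0) = 0\<^sub>m (NN r m) (NN r m)"
  by (rule eq_matI) auto

lemma toM_inj:
  assumes "tsupp r m F" "tsupp r m G" "toM r m F = toM r m G"
  shows "F = G"
proof (intro ext)
  fix a b
  show "F a b = G a b"
  proof (cases "a \<in> tidx r m \<and> b \<in> tidx r m")
    case True
    then obtain i j where ij: "i < NN r m" "j < NN r m" "Lst r m ! i = a" "Lst r m ! j = b"
      using tidx_ex by blast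
    have "toM r m F $$ (i,j) = toM r m G $$ (i,j)" using assms(3) by simp
    then show ?thesis using ij by simp
  next
    case False
    then show ?thesis using assms(1,2) by (auto simp: tsupp_def)
  qed
qed

lemma (in comm_ring_hom) toM_hom: "map_mat hom (toM r m F) = toM r m (\<lambda>a b. hom (F a b))"
  by (rule eq_matI) auto

lemma pi_supp: "tsupp r m (pi_r r m q e)"
  by (induction e) (auto simp: tsupp_def tid_def tmul_def Tmat_def)

definition hpoly :: "'k::zero poly \<Rightarrow> 'k hexp \<Rightarrow> 'k hexp" where
  "hpoly p e = foldr (\<lambda>a acc. HAdd (HC a) (HMul e acc)) (coeffs p) (HC 0)"

lemma goldman_hpoly: "goldman r q (hpoly p e) = hpoly p (goldman r q e)"
proof -
  have "goldman r q (foldr (\<lambda>a acc. HAdd (HC a) (HMul e acc)) xs (HC 0)) =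
        foldr (\<lambda>a acc. HAdd (HC a) (HMul (goldman r q e) acc)) xs (HC 0)" for xs
    by (induction xs) auto
  then show ?thesis by (simp add: hpoly_def)
qed

lemma toM_pi_hpoly:
  fixes q :: "'k::field"
  shows "toM r m (pi_r r m q (hpoly p e)) = peval p (toM r m (pi_r r m q e))"
proof -
  have "toM r m (pi_r r m q (foldr (\<lambda>a acc. HAdd (HC a) (HMul e acc)) xs (HC 0))) =
        foldr (\<lambda>a acc. a \<cdot>\<^sub>m 1\<^sub>m (NN r m) + toM r m (pi_r r m q e) * acc) xs (0\<^sub>m (NN r m) (NN r m))" for xs
  proof (induction xs)
    case Nil
    then show ?case by (simp add: toM_zero[symmetric])
  next
    case (Cons a xs)
    then show ?case by (simp add: toM_add toM_smult toM_tid toM_tmul)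
  qed
  then show ?thesis by (simp add: hpoly_def peval_def)
qed




definition Tp :: "nat \<Rightarrow> nat \<Rightarrow> 'a::comm_ring_1 \<Rightarrow> nat \<Rightarrow> 'a tmat" where
  "Tp r m t i = (\<lambda>a b. if a \<in> tidx r m \<and> b \<in> tidx r m then
     (if b!(i-1) = b!i then (if a = b then t*t else 0)
      else if b!(i-1) < b!i then (if a = swap_at i b then t else 0) + (if a = b then t*t - 1 else 0)
      else (if a = swap_at i b then t else 0)) else 0)"

definition Tgp :: "nat \<Rightarrow> nat \<Rightarrow> 'a::comm_ring_1 \<Rightarrow> nat \<Rightarrow> 'a tmat" where
  "Tgp r m t i = (\<lambda>a b. if a \<in> tidx r m \<and> b \<in> tidx r m then
     (if b!(i-1) = b!i then (if a = b then -1 else 0)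
      else if b!(i-1) < b!i then (if a = swap_at i b then -t else 0)
      else (if a = swap_at i b then -t else 0) + (if a = b then t*t - 1 else 0)) else 0)"

definition tprod :: "nat \<Rightarrow> nat \<Rightarrow> (nat \<Rightarrow> 'a::comm_ring_1 tmat) \<Rightarrow> nat list \<Rightarrow> 'a tmat" where
  "tprod r m T w = foldr (\<lambda>i acc. tmul r m (T i) acc) w (tid r m)"

function tw :: "nat \<Rightarrow> nat \<Rightarrow> nat list" where
  "tw k l = (if l \<le> Suc k then [l] else l # tw k (l - 1) @ [l])"
  by auto
termination by (relation "measure (\<lambda>(k,l). l)") auto

declare tw.simps[simp del]

definition prs :: "nat \<Rightarrow> (nat \<times> nat) list" where
  "prs r = concat (map (\<lambda>l. map (\<lambda>k. (k,l)) [0..<l]) [0..<r])"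

lemma set_prs: "set (prs r) = {(k,l). k < l \<and> l < r}"
  by (auto simp: prs_def)

lemma distinct_prs: "distinct (prs r)"
  unfolding prs_def by (induction r) (auto simp: distinct_map inj_on_def)

definition ZM :: "nat \<Rightarrow> nat \<Rightarrow> (nat \<Rightarrow> 'a::comm_ring_1 tmat) \<Rightarrow> 'a tmat" where
  "ZM r m T = (\<lambda>a b. sum_list (map (\<lambda>p. tprod r m T (tw (fst p) (snd p)) a b) (prs r)))"

lemma set_tw: "k < l \<Longrightarrow> i \<in> set (tw k l) \<Longrightarrow> Suc k \<le> i \<and> i \<le> l"
proof (induction k l rule: tw.induct)
  case (1 k l)
  show ?case
  proof (cases "l \<le> Suc k")
    case True
    then show ?thesis using 1 by (simp add: tw.simps)
  next
    case False
    then have "i = l \<or> i \<in> set (tw k (l - 1))" using 1(3) by (simp add: tw.simps)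
    moreover have "k < l - 1" using False by arith
    ultimately show ?thesis using 1(1)[OF False] False by auto
  qed
qed

lemma length_tw: "odd (length (tw k l))"
proof (induction k l rule: tw.induct)
  case (1 k l)
  then show ?case by (cases "l \<le> Suc k") (simp_all add: tw.simps)
qed

lemma tprod_cong: "(\<And>i. i \<in> set w \<Longrightarrow> T i = T' i) \<Longrightarrow> tprod r m T w = tprod r m T' w"
  unfolding tprod_def by (induction w) auto

lemma ZM_cong:
  assumes "\<And>i. 1 \<le> i \<Longrightarrow> i < r \<Longrightarrow> T i = T' i"
  shows "ZM r m T = ZM r m T'"
proof -
  have "tprod r m T (tw (fst p) (snd p)) = tprod r m T' (tw (fst p) (snd p))" if "p \<in> set (prs r)" for p
  proof (rule tprod_cong)
    fix i assume "i \<in> set (tw (fst p) (snd p))"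
    then show "T i = T' i" using that set_tw[of "fst p" "snd p" i] assms by (auto simp: set_prs)
  qed
  then show ?thesis unfolding ZM_def by (intro ext arg_cong[where f=sum_list] map_cong) auto
qed

context comm_ring_hom begin

lemma tmul_hom: "hom (tmul r m F G a b) = tmul r m (\<lambda>x y. hom (F x y)) (\<lambda>x y. hom (G x y)) a b"
  by (simp add: tmul_def hom_distribs)

lemma tid_hom: "hom (tid r m a b) = tid r m a b"
  by (auto simp: tid_def)

lemma hom_if: "hom (if P then x else y) = (if P then hom x else hom y)"
  by simp

lemma Tp_hom: "hom (Tp r m t i a b) = Tp r m (hom t) i a b"
  unfolding Tp_def hom_if by (simp add: hom_distribs)

lemma Tgp_hom: "hom (Tgp r m t i a b) = Tgp r m (hom t) i a b"
  unfolding Tgp_def hom_if by (simp add: hom_distribs)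

lemma tprod_hom: "hom (tprod r m T w a b) = tprod r m (\<lambda>i x y. hom (T i x y)) w a b"
proof (induction w arbitrary: a b)
  case Nil
  then show ?case by (simp add: tprod_def tid_hom)
next
  case (Cons i w)
  then show ?case by (simp add: tprod_def tmul_hom)
qed

lemma ZM_hom: "hom (ZM r m T a b) = ZM r m (\<lambda>i x y. hom (T i x y)) a b"
  by (simp add: ZM_def hom_sum_list o_def tprod_hom)

lemma ZM_Tp_hom: "(\<lambda>a b. hom (ZM r m (Tp r m t) a b)) = ZM r m (Tp r m (hom t))"
  by (simp add: ZM_hom Tp_hom)

lemma ZM_Tgp_hom: "(\<lambda>a b. hom (ZM r m (Tgp r m t) a b)) = ZM r m (Tgp r m (hom t))"
  by (simp add: ZM_hom Tgp_hom)

end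


definition Pm :: "nat \<Rightarrow> nat \<Rightarrow> (nat list \<Rightarrow> nat list) \<Rightarrow> 'a::comm_ring_1 tmat" where
  "Pm r m f = (\<lambda>a b. if a \<in> tidx r m \<and> b \<in> tidx r m \<and> a = f b then 1 else 0)"

definition swp :: "nat \<Rightarrow> nat \<Rightarrow> nat list \<Rightarrow> nat list" where
  "swp k l b = b[k := b!l, l := b!k]"

definition fw :: "nat list \<Rightarrow> nat list \<Rightarrow> nat list" where
  "fw w = foldr (\<lambda>i f. swap_at i \<circ> f) w id"

lemma fw_append: "fw (xs @ ys) = fw xs \<circ> fw ys"
  unfolding fw_def by (induction xs) auto

lemma length_swap_at[simp]: "length (swap_at i b) = length b"
  by (simp add: swap_at_def)

lemma swap_at_tidx: "1 \<le> i \<Longrightarrow> i < r \<Longrightarrow> b \<in> tidx r m \<Longrightarrow> swap_at i b \<in> tidx r m"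
  unfolding tidx_def swap_at_def by (auto simp: set_swap)

lemma set_swap_at: "1 \<le> i \<Longrightarrow> i < length b \<Longrightarrow> set (swap_at i b) = set b"
  unfolding swap_at_def by (simp add: set_swap)

lemma finite_tidx[simp]: "finite (tidx r m)"
  by (metis set_Lst List.finite_set)

lemma swap_at_eq: "1 \<le> i \<Longrightarrow> i < length b \<Longrightarrow> (swap_at i b = b) = (b!(i-1) = b!i)"
  unfolding swap_at_def
  by (metis (no_types, lifting) diff_less le_eq_less_or_eq less_imp_diff_less list_update_id
      list_update_overwrite nth_list_update_eq zero_less_one list_update_swap less_numeral_extra(3) nat_neq_iff)

lemma swap_at_eq': "1 \<le> i \<Longrightarrow> i < length b \<Longrightarrow> (b = swap_at i b) = (b!(i-1) = b!i)"
  using swap_at_eq by metis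

lemma Tp_one: "1 \<le> i \<Longrightarrow> i < r \<Longrightarrow> Tp r m (1::'a::comm_ring_1) i = Pm r m (swap_at i)"
  unfolding Tp_def Pm_def
  by (intro ext) (auto simp: swap_at_eq swap_at_eq' tidx_def set_swap_at)

lemma Tgp_one: "1 \<le> i \<Longrightarrow> i < r \<Longrightarrow> Tgp r m (1::'a::comm_ring_1) i = (\<lambda>a b. - Pm r m (swap_at i) a b)"
  unfolding Tgp_def Pm_def
  by (intro ext) (auto simp: swap_at_eq swap_at_eq' tidx_def set_swap_at)

lemma tmul_Pm:
  assumes g: "\<And>b. b \<in> tidx r m \<Longrightarrow> g b \<in> tidx r m"
  shows "tmul r m (\<lambda>a b. x * Pm r m f a b) (\<lambda>a b. y * Pm r m g a b) = (\<lambda>a b. (x * y) * (Pm r m (f \<circ> g) a b :: 'a::comm_ring_1))"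
proof (intro ext)
  fix a b
  have "tmul r m (\<lambda>a b. x * Pm r m f a b) (\<lambda>a b. y * Pm r m g a b) a b =
        (\<Sum>c\<in>tidx r m. (if c = g b \<and> b \<in> tidx r m then x * y * Pm r m f a c else 0))"
    unfolding tmul_def by (intro sum.cong) (auto simp: Pm_def)
  also have "\<dots> = (x * y) * Pm r m (f \<circ> g) a b"
  proof (cases "b \<in> tidx r m")
    case True
    have "(\<Sum>c\<in>tidx r m. (if c = g b \<and> b \<in> tidx r m then x * y * Pm r m f a c else 0)) =
          (\<Sum>c\<in>tidx r m. (if c = g b then x * y * Pm r m f a c else 0))" using True by simp
    also have "\<dots> = x * y * Pm r m f a (g b)" using g[OF True] by (simp add: sum.delta')
    finally show ?thesis using True g[OF True] by (simp add: Pm_def)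
  next
    case False
    then show ?thesis by (simp add: Pm_def)
  qed
  finally show "tmul r m (\<lambda>a b. x * Pm r m f a b) (\<lambda>a b. y * Pm r m g a b) a b = (x * y) * Pm r m (f \<circ> g) a b" .
qed

lemma tid_Pm: "tid r m = Pm r m (\<lambda>x. x)"
  by (intro ext) (auto simp: tid_def Pm_def)

lemma fw_tidx: "(\<And>i. i \<in> set w \<Longrightarrow> 1 \<le> i \<and> i < r) \<Longrightarrow> b \<in> tidx r m \<Longrightarrow> fw w b \<in> tidx r m"
  unfolding fw_def by (induction w) (auto intro: swap_at_tidx)

lemma tprod_Pm:
  assumes "\<And>i. i \<in> set w \<Longrightarrow> 1 \<le> i \<and> i < r"
    and "\<And>i. 1 \<le> i \<Longrightarrow> i < r \<Longrightarrow> T i = (\<lambda>a b. s * Pm r m (swap_at i) a b)"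
  shows "tprod r m T w = (\<lambda>a b. s ^ length w * (Pm r m (fw w) a b :: 'a::comm_ring_1))"
  using assms(1)
proof (induction w)
  case Nil
  then show ?case by (simp add: tprod_def tid_Pm fw_def id_def)
next
  case (Cons i w)
  have "tprod r m T (i # w) = tmul r m (\<lambda>a b. s * Pm r m (swap_at i) a b) (\<lambda>a b. s ^ length w * Pm r m (fw w) a b)"
    using Cons assms(2) by (simp add: tprod_def)
  also have "\<dots> = (\<lambda>a b. (s * s ^ length w) * Pm r m (swap_at i \<circ> fw w) a b)"
    by (rule tmul_Pm) (use Cons.prems fw_tidx in auto)
  finally show ?case by (simp add: fw_def comp_def)
qed

lemma fw_tw: "k < l \<Longrightarrow> l < length b \<Longrightarrow> fw (tw k l) b = swp k l b"
proof (induction k l arbitrary: b rule: tw.induct)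
  case (1 k l)
  show ?case
  proof (cases "l \<le> Suc k")
    case True
    then have "l = Suc k" using 1 by simp
    then show ?thesis by (simp add: tw.simps fw_def swap_at_def swp_def)
  next
    case False
    have tw: "tw k l = [l] @ tw k (l - 1) @ [l]" using False by (simp add: tw.simps)
    have "fw (tw k l) b = swap_at l (fw (tw k (l-1)) (swap_at l b))"
      unfolding tw fw_append by (simp add: fw_def)
    also have "\<dots> = swap_at l (swp k (l-1) (swap_at l b))"
      using 1 False by simp
    also have "\<dots> = swp k l b"
      using 1(2,3) False
      by (intro nth_equalityI) (auto simp: swap_at_def swp_def nth_list_update)
    finally show ?thesis .
  qed
qed

lemma Pm_cong: "(\<And>b. b \<in> tidx r m \<Longrightarrow> f b = g b) \<Longrightarrow> Pm r m f = Pm r m g"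
  unfolding Pm_def by (intro ext) auto

lemma ZM_sum: "ZM r m T = (\<lambda>a b. \<Sum>p\<in>set (prs r). tprod r m T (tw (fst p) (snd p)) a b)"
  by (simp add: ZM_def sum_list_distinct_conv_sum_set[OF distinct_prs])

definition Msw :: "nat \<Rightarrow> nat \<Rightarrow> 'a::comm_ring_1 tmat" where
  "Msw r m = (\<lambda>a b. \<Sum>p\<in>set (prs r). Pm r m (swp (fst p) (snd p)) a b)"

lemma tprod_tw_one:
  assumes p: "p \<in> set (prs r)"
  shows "tprod r m (Tp r m (1::'a::comm_ring_1)) (tw (fst p) (snd p)) = Pm r m (swp (fst p) (snd p))"
    "tprod r m (Tgp r m (1::'a::comm_ring_1)) (tw (fst p) (snd p)) = (\<lambda>a b. - Pm r m (swp (fst p) (snd p)) a b)"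
proof -
  have rng: "1 \<le> i \<and> i < r" if "i \<in> set (tw (fst p) (snd p))" for i
    using set_tw[OF _ that] p by (auto simp: set_prs)
  have fwe: "Pm r m (fw (tw (fst p) (snd p))) = (Pm r m (swp (fst p) (snd p)) :: 'a tmat)"
    by (rule Pm_cong) (use p fw_tw in \<open>auto simp: set_prs tidx_def\<close>)
  have T1: "Tp r m (1::'a) i = (\<lambda>a b. 1 * Pm r m (swap_at i) a b)" if "1 \<le> i" "i < r" for i
    using Tp_one[OF that] by simp
  have T2: "Tgp r m (1::'a) i = (\<lambda>a b. (-1) * Pm r m (swap_at i) a b)" if "1 \<le> i" "i < r" for i
    using Tgp_one[OF that] by simp
  show "tprod r m (Tp r m (1::'a::comm_ring_1)) (tw (fst p) (snd p)) = Pm r m (swp (fst p) (snd p))"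
    using tprod_Pm[of "tw (fst p) (snd p)" r "Tp r m 1" 1 m, OF rng T1] fwe by simp
  show "tprod r m (Tgp r m (1::'a::comm_ring_1)) (tw (fst p) (snd p)) = (\<lambda>a b. - Pm r m (swp (fst p) (snd p)) a b)"
    using tprod_Pm[of "tw (fst p) (snd p)" r "Tgp r m 1" "-1" m, OF rng T2] fwe length_tw[of "fst p" "snd p"]
    by (simp add: neg_one_odd_power)
qed

lemma ZM_one: "ZM r m (Tp r m (1::'a::comm_ring_1)) = Msw r m"
  unfolding ZM_sum Msw_def
proof (intro ext sum.cong refl)
  fix a b p assume "p \<in> set (prs r)"
  then show "tprod r m (Tp r m 1) (tw (fst p) (snd p)) a b = Pm r m (swp (fst p) (snd p)) a b"
    using tprod_tw_one(1) by metis
qed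

lemma ZMg_one: "ZM r m (Tgp r m (1::'a::comm_ring_1)) = (\<lambda>a b. - Msw r m a b)"
  unfolding ZM_sum Msw_def sum_negf[symmetric]
proof (intro ext sum.cong refl)
  fix a b p assume "p \<in> set (prs r)"
  then show "tprod r m (Tgp r m 1) (tw (fst p) (snd p)) a b = - Pm r m (swp (fst p) (snd p)) a b"
    using tprod_tw_one(2) by metis
qed




lemma tmul_HC: "tmul r m (\<lambda>a b. c * tid r m a b) F a b = (if a \<in> tidx r m then c * F a b else 0)"
proof -
  have "tmul r m (\<lambda>a b. c * tid r m a b) F a b = (\<Sum>x\<in>tidx r m. if a = x then (if a \<in> tidx r m then c * F x b else 0) else 0)"
    unfolding tmul_def by (intro sum.cong) (auto simp: tid_def)
  also have "\<dots> = (if a \<in> tidx r m then c * F a b else 0)" by (simp add: sum.delta)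
  finally show ?thesis .
qed

lemma Tmat_supp: "a \<notin> tidx r m \<Longrightarrow> Tmat r m q i a b = 0"
  by (simp add: Tmat_def)

lemma swap_at_neq: "1 \<le> i \<Longrightarrow> i < length b \<Longrightarrow> b!(i-1) \<noteq> b!i \<Longrightarrow> swap_at i b \<noteq> b"
  using swap_at_eq by metis

lemma pi_T'_entry:
  fixes q :: "'k::field"
  shows "pi_r r m q (HMul (HC q) (HT i)) a b = (if a \<in> tidx r m then q * pi_r r m q (HT i) a b else 0)"
  by (simp only: pi_r.simps tmul_HC)

lemma pi_gT'_entry:
  fixes q :: "'k::field"
  assumes i: "1 \<le> i" "i < r"
  shows "pi_r r m q (HMul (HC q) (goldman r q (HT i))) a b =
     (if a \<in> tidx r m then q * ((q - inverse q) * tid r m a b - Tmat r m q i a b) else 0)"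
proof -
  have "pi_r r m q (goldman r q (HT i)) a b = (q - inverse q) * tid r m a b + tmul r m (\<lambda>a b. (-1) * tid r m a b) (Tmat r m q i) a b"
    using i by simp
  also have "\<dots> = (q - inverse q) * tid r m a b - Tmat r m q i a b"
    by (simp only: tmul_HC) (auto simp: Tmat_def tid_def)
  finally show ?thesis by (simp only: pi_r.simps tmul_HC)
qed

lemma pi_T':
  fixes q :: "'k::field"
  assumes q: "q \<noteq> 0" and i: "1 \<le> i" "i < r"
  shows "pi_r r m q (HMul (HC q) (HT i)) = Tp r m q i"
proof (intro ext)
  fix a b
  show "pi_r r m q (HMul (HC q) (HT i)) a b = Tp r m q i a b"
  proof (cases "a \<in> tidx r m \<and> b \<in> tidx r m")
    case True
    then have lb: "i < length b" using i by (simp add: tidx_def)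
    have "q * (q - inverse q) = q * q - 1" using q by (simp add: field_simps)
    then show ?thesis using True i q swap_at_neq[OF i(1) lb] unfolding pi_T'_entry
      by (auto simp: Tmat_def Tp_def Let_def algebra_simps)
  next
    case False
    then show ?thesis unfolding pi_T'_entry using i by (auto simp: Tmat_def Tp_def)
  qed
qed

lemma pi_gT':
  fixes q :: "'k::field"
  assumes q: "q \<noteq> 0" and i: "1 \<le> i" "i < r"
  shows "pi_r r m q (HMul (HC q) (goldman r q (HT i))) = Tgp r m q i"
proof (intro ext)
  fix a b
  show "pi_r r m q (HMul (HC q) (goldman r q (HT i))) a b = Tgp r m q i a b"
  proof (cases "a \<in> tidx r m \<and> b \<in> tidx r m")
    case True
    then have lb: "i < length b" using i by (simp add: tidx_def)
    have "q * (q - inverse q) = q * q - 1" using q by (simp add: field_simps)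
    then show ?thesis using True i q swap_at_neq[OF i(1) lb] unfolding pi_gT'_entry[OF i]
      by (auto simp: Tmat_def Tgp_def Let_def algebra_simps tid_def)
  next
    case False
    then show ?thesis unfolding pi_gT'_entry[OF i] using i by (auto simp: Tmat_def Tgp_def tid_def)
  qed
qed

definition wexpG :: "(nat \<Rightarrow> 'k hexp) \<Rightarrow> nat list \<Rightarrow> 'k::one hexp" where
  "wexpG G w = foldr (\<lambda>i acc. HMul (G i) acc) w (HC 1)"

definition zexpG :: "(nat \<Rightarrow> 'k hexp) \<Rightarrow> (nat \<times> nat) list \<Rightarrow> 'k::{one,zero} hexp" where
  "zexpG G ps = foldr (\<lambda>p acc. HAdd (wexpG G (tw (fst p) (snd p))) acc) ps (HC 0)"

lemma goldman_zexpG: "goldman r q (zexpG G ps) = zexpG (\<lambda>i. goldman r q (G i)) ps"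
proof -
  have w: "goldman r q (wexpG G w) = wexpG (\<lambda>i. goldman r q (G i)) w" for w
    unfolding wexpG_def by (induction w) auto
  show ?thesis unfolding zexpG_def by (induction ps) (auto simp: w)
qed

lemma pi_wexpG: "pi_r r m q (wexpG G w) = tprod r m (\<lambda>i. pi_r r m q (G i)) w"
proof (induction w)
  case Nil
  then show ?case by (auto simp: wexpG_def tprod_def)
next
  case (Cons i w)
  then show ?case by (simp add: wexpG_def tprod_def)
qed

lemma pi_zexpG: "pi_r r m q (zexpG G ps) a b = sum_list (map (\<lambda>p. tprod r m (\<lambda>i. pi_r r m q (G i)) (tw (fst p) (snd p)) a b) ps)"
  by (induction ps) (auto simp: zexpG_def pi_wexpG)

definition Zq :: "'k::field \<Rightarrow> nat \<Rightarrow> 'k hexp" where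
  "Zq q r = zexpG (\<lambda>i. HMul (HC q) (HT i)) (prs r)"

lemma pi_Zq:
  fixes q :: "'k::field"
  assumes q: "q \<noteq> 0"
  shows "pi_r r m q (Zq q r) = ZM r m (Tp r m q)"
proof -
  have "pi_r r m q (Zq q r) = ZM r m (\<lambda>i. pi_r r m q (HMul (HC q) (HT i)))"
    by (intro ext) (simp add: Zq_def pi_zexpG ZM_def)
  also have "\<dots> = ZM r m (Tp r m q)"
    by (rule ZM_cong, rule pi_T'[OF q], assumption+)
  finally show ?thesis .
qed

lemma pi_gZq:
  fixes q :: "'k::field"
  assumes q: "q \<noteq> 0"
  shows "pi_r r m q (goldman r q (Zq q r)) = ZM r m (Tgp r m q)"
proof -
  have "pi_r r m q (goldman r q (Zq q r)) = ZM r m (\<lambda>i. pi_r r m q (HMul (HC q) (goldman r q (HT i))))"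
    by (intro ext) (simp only: Zq_def goldman_zexpG pi_zexpG ZM_def goldman.simps(1,4))
  also have "\<dots> = ZM r m (Tgp r m q)"
    by (rule ZM_cong, rule pi_gT'[OF q], assumption+)
  finally show ?thesis .
qed




lemma eval_hom: "comm_ring_hom (\<lambda>p::rat poly. poly (map_poly (of_rat :: rat \<Rightarrow> 'k::field_char_0) p) x)"
proof -
  interpret mh: map_poly_comm_ring_hom "of_rat :: rat \<Rightarrow> 'k" ..
  show ?thesis by unfold_locales (simp_all add: mh.hom_add mh.hom_mult)
qed

lemma det_hom_transfer:
  assumes h: "comm_ring_hom h"
  shows "h (det (peval (char_poly (toM r m (ZM r m (Tgp r m (t::'a::comm_ring_1))))) (toM r m (ZM r m (Tp r m t))))) =
    det (peval (char_poly (toM r m (ZM r m (Tgp r m (h t))))) (toM r m (ZM r m (Tp r m (h t)))))"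
proof -
  interpret comm_ring_hom h by (rule h)
  let ?X = "toM r m (ZM r m (Tp r m t))" and ?Y = "toM r m (ZM r m (Tgp r m t))"
  have X: "?X \<in> carrier_mat (NN r m) (NN r m)" and Y: "?Y \<in> carrier_mat (NN r m) (NN r m)" by auto
  have "h (det (peval (char_poly ?Y) ?X)) = det (map_mat h (peval (char_poly ?Y) ?X))" by simp
  also have "\<dots> = det (peval (char_poly (map_mat h ?Y)) (map_mat h ?X))"
    by (simp add: peval_hom[OF X] char_poly_hom[OF Y])
  also have "map_mat h ?X = toM r m (ZM r m (Tp r m (h t)))" by (simp add: toM_hom ZM_Tp_hom)
  also have "map_mat h ?Y = toM r m (ZM r m (Tgp r m (h t)))" by (simp add: toM_hom ZM_Tgp_hom)
  finally show ?thesis .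
qed

lemma heq_gg: "heq r q (goldman r q (goldman r q e)) e"
proof (induction e)
  case (HC c)
  then show ?case by (simp add: heq.h_refl)
next
  case (HT i)
  show ?case
  proof (cases "1 \<le> i \<and> i < r")
    case False
    then have "goldman r q (HT i) = HT i" by auto
    then show ?thesis by (simp add: heq.h_refl)
  next
    case True
    define d where "d = q - inverse q"
    let ?T = "HT i :: 'a hexp"
    have s3: "heq r q (HMul (HC (-1)) (HMul (HC (-1)) ?T)) ?T"
    proof -
      have "heq r q (HMul (HC (-1)) (HMul (HC (-1)) ?T)) (HMul (HMul (HC (-1)) (HC (-1))) ?T)"
        by (rule heq.h_sym, rule heq.h_mul_assoc)
      moreover have "heq r q (HMul (HMul (HC (-1)) (HC (-1))) ?T) (HMul (HC ((-1) * (-1))) ?T)"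
        by (rule heq.h_mul_cong, rule heq.h_const_mul, rule heq.h_refl)
      moreover have "heq r q (HMul (HC ((-1) * (-1))) ?T) ?T"
        using heq.h_mul_one_l[of r q ?T] by simp
      ultimately show ?thesis by (meson heq.h_trans)
    qed
    have s1: "heq r q (HMul (HC (-1)) (HAdd (HC d) (HMul (HC (-1)) ?T))) (HAdd (HC (-d)) ?T)"
    proof -
      have "heq r q (HMul (HC (-1)) (HAdd (HC d) (HMul (HC (-1)) ?T)))
              (HAdd (HMul (HC (-1)) (HC d)) (HMul (HC (-1)) (HMul (HC (-1)) ?T)))"
        by (rule heq.h_distrib_l)
      moreover have "heq r q (HAdd (HMul (HC (-1)) (HC d)) (HMul (HC (-1)) (HMul (HC (-1)) ?T)))
              (HAdd (HC ((-1) * d)) ?T)"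
        by (rule heq.h_add_cong, rule heq.h_const_mul, rule s3)
      ultimately show ?thesis by (simp, meson heq.h_trans)
    qed
    have "heq r q (HAdd (HC d) (HMul (HC (-1)) (HAdd (HC d) (HMul (HC (-1)) ?T)))) ?T"
    proof -
      have "heq r q (HAdd (HC d) (HMul (HC (-1)) (HAdd (HC d) (HMul (HC (-1)) ?T)))) (HAdd (HC d) (HAdd (HC (-d)) ?T))"
        by (rule heq.h_add_cong, rule heq.h_refl, rule s1)
      moreover have "heq r q (HAdd (HC d) (HAdd (HC (-d)) ?T)) (HAdd (HAdd (HC d) (HC (-d))) ?T)"
        by (rule heq.h_sym, rule heq.h_add_assoc)
      moreover have "heq r q (HAdd (HAdd (HC d) (HC (-d))) ?T) (HAdd (HC (d + - d)) ?T)"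
        by (rule heq.h_add_cong, rule heq.h_const_add, rule heq.h_refl)
      moreover have "heq r q (HAdd (HC (d + - d)) ?T) (HAdd ?T (HC 0))"
        using heq.h_add_comm[of r q "HC 0" ?T] by simp
      moreover have "heq r q (HAdd ?T (HC 0)) ?T" by (rule heq.h_add_zero)
      ultimately show ?thesis by (meson heq.h_trans)
    qed
    then show ?thesis using True by (simp add: d_def)
  qed
next
  case (HAdd e1 e2)
  then show ?case by (simp add: heq.h_add_cong)
next
  case (HMul e1 e2)
  then show ?case by (simp add: heq.h_mul_cong)
qed

lemma tmul_tid_left: "tsupp r m F \<Longrightarrow> tmul r m (tid r m) F = (F :: 'a::comm_ring_1 tmat)"
proof (intro ext)
  fix a b assume F: "tsupp r m F"
  have "tmul r m (\<lambda>a b. 1 * tid r m a b) F a b = F a b"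
    using F by (simp only: tmul_HC) (auto simp: tsupp_def)
  then show "tmul r m (tid r m) F a b = F a b" by simp
qed

lemma tmul_zero_left: "tmul r m (\<lambda>a b. 0) F = (\<lambda>a b. 0)"
  by (simp add: tmul_def)

lemma tid_supp: "tsupp r m (tid r m)"
  by (simp add: tsupp_def tid_def)

lemma zero_supp: "tsupp r m (\<lambda>a b. 0)"
  by (simp add: tsupp_def)




lemma cs_int:
  fixes u :: "nat \<Rightarrow> int"
  shows "(\<Sum>x<m. u x)^2 \<le> int m * (\<Sum>x<m. (u x)^2)"
proof -
  have "0 \<le> (\<Sum>x<m. \<Sum>y<m. (u x - u y)^2)" by (intro sum_nonneg) auto
  also have "(\<Sum>x<m. \<Sum>y<m. (u x - u y)^2) = (\<Sum>x<m. \<Sum>y<m. (u x)^2 + (u y)^2 - 2 * u x * u y)"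
    by (simp add: power2_eq_square algebra_simps)
  also have "\<dots> = (\<Sum>x<m. \<Sum>y<m. (u x)^2) + (\<Sum>x<m. \<Sum>y<m. (u y)^2) - 2 * (\<Sum>x<m. \<Sum>y<m. u x * u y)"
    by (simp only: sum.distrib sum_subtractf sum_distrib_left mult.assoc)
  also have "(\<Sum>x<m. \<Sum>y<m. u x * u y) = (\<Sum>x<m. u x)^2"
    by (simp add: power2_eq_square sum_product)
  also have "(\<Sum>x<m. \<Sum>y<m. (u x)^2) = int m * (\<Sum>x<m. (u x)^2)"
    by (simp add: sum_distrib_left mult.commute)
  also have "(\<Sum>x<m. \<Sum>y<m. (u y)^2) = int m * (\<Sum>x<m. (u x)^2)"
    by simp
  finally show ?thesis by simp
qed

lemma pair_count_bound:
  assumes a: "length a = r" "set a \<subseteq> {..<m}" and rm: "m^2 < r"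
  shows "int r * int m < (\<Sum>k<r. \<Sum>l<r. if a!k = a!l then 1 else 0)"
proof -
  define u where "u x = (\<Sum>k<r. if a!k = x then 1 else (0::int))" for x
  have ak: "a!k < m" if "k < r" for k using a that nth_mem by blast
  have P: "(\<Sum>k<r. \<Sum>l<r. if a!k = a!l then 1 else (0::int)) = (\<Sum>x<m. (u x)^2)"
  proof -
    have "(\<Sum>k<r. \<Sum>l<r. if a!k = a!l then 1 else (0::int)) =
          (\<Sum>k<r. \<Sum>l<r. \<Sum>x<m. (if a!k = x then 1 else 0) * (if a!l = x then 1 else 0))"
    proof (intro sum.cong refl)
      fix k l assume "k \<in> {..<r}" "l \<in> {..<r}"
      then show "(if a!k = a!l then 1 else (0::int)) = (\<Sum>x<m. (if a!k = x then 1 else 0) * (if a!l = x then 1 else 0))"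
        using ak[of k] by (simp add: if_distrib[where f="\<lambda>z. z * _"] sum.delta' cong: if_cong)
    qed
    also have "\<dots> = (\<Sum>k<r. \<Sum>x<m. \<Sum>l<r. (if a!k = x then 1 else 0) * (if a!l = x then 1 else 0))"
      by (rule sum.cong[OF refl], rule sum.swap)
    also have "\<dots> = (\<Sum>x<m. \<Sum>k<r. \<Sum>l<r. (if a!k = x then 1 else 0) * (if a!l = x then 1 else 0))"
      by (rule sum.swap)
    also have "\<dots> = (\<Sum>x<m. (u x)^2)"
      by (simp add: u_def power2_eq_square sum_product)
    finally show ?thesis .
  qed
  have U: "(\<Sum>x<m. u x) = int r"
  proof -
    have "(\<Sum>x<m. u x) = (\<Sum>k<r. \<Sum>x<m. if a!k = x then 1 else (0::int))"
      unfolding u_def by (rule sum.swap)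
    also have "\<dots> = (\<Sum>k<r. 1)" using ak by (intro sum.cong refl) (simp add: sum.delta)
    finally show ?thesis by simp
  qed
  have m0: "0 < m"
  proof (rule ccontr)
    assume "\<not> 0 < m"
    then have "m = 0" by simp
    then have "r > 0" using rm by simp
    then have "a!0 < m" using ak by simp
    then show False using \<open>m = 0\<close> by simp
  qed
  have "(int r)^2 \<le> int m * (\<Sum>x<m. (u x)^2)" using cs_int[of u m] U by simp
  moreover have "int m * (int r * int m) < (int r)^2"
  proof -
    have "int m * int m < int r" using rm by (simp add: power2_eq_square) (metis of_nat_less_iff of_nat_mult)
    then have "int r * (int m * int m) < int r * int r" using rm by (intro mult_strict_left_mono) auto
    then show ?thesis by (simp add: power2_eq_square algebra_simps)
  qed
  ultimately have "int m * (int r * int m) < int m * (\<Sum>x<m. (u x)^2)" by linarith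
  then have "int r * int m < (\<Sum>x<m. (u x)^2)" using m0 by (simp add: mult_less_cancel_left)
  then show ?thesis using P by simp
qed



lemma upd_tidx: "c \<in> tidx r m \<Longrightarrow> x < m \<Longrightarrow> c[k:=x] \<in> tidx r m"
  unfolding tidx_def by (auto dest: set_update_subset_insert[THEN subsetD])

lemma tidx_nth: "c \<in> tidx r m \<Longrightarrow> k < r \<Longrightarrow> c!k < m"
  unfolding tidx_def by (auto dest: nth_mem)

lemma L1:
  fixes f :: "nat list \<Rightarrow> complex"
  assumes kl: "k < r" "l < r" "k \<noteq> l" and xy: "x < m" "y < m"
  shows "(\<Sum>c\<in>tidx r m. if c!k = y \<and> c!l = y then cnj (f (c[k:=x])) * f (c[l:=x]) else 0) =
         (\<Sum>a\<in>tidx r m. if a!k = x \<and> a!l = y then cnj (f a) * f (swp k l a) else 0)"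
proof -
  let ?S = "{c\<in>tidx r m. c!k = y \<and> c!l = y}" and ?T = "{a\<in>tidx r m. a!k = x \<and> a!l = y}"
  have len: "length c = r" if "c \<in> tidx r m" for c using that by (simp add: tidx_def)
  have "(\<Sum>c\<in>?S. cnj (f (c[k:=x])) * f (c[l:=x])) = (\<Sum>a\<in>?T. cnj (f a) * f (swp k l a))"
  proof (rule sum.reindex_bij_witness[of ?S "\<lambda>a. a[k:=y]" "\<lambda>c. c[k:=x]"])
    fix c assume c: "c \<in> ?S"
    show "(c[k:=x])[k:=y] = c" using c list_update_id[of c k] by auto
    show "c[k:=x] \<in> ?T" using c kl xy len[of c] by (auto intro: upd_tidx)
    show "cnj (f (c[k:=x])) * f (swp k l (c[k:=x])) = cnj (f (c[k:=x])) * f (c[l:=x])"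
    proof -
      have "c[k := y] = c" using c list_update_id[of c k] by auto
      then have "swp k l (c[k:=x]) = c[l:=x]" using c kl len[of c] by (simp add: swp_def list_update_swap)
      then show ?thesis by simp
    qed
  next
    fix a assume a: "a \<in> ?T"
    show "(a[k:=y])[k:=x] = a" using a list_update_id[of a k] by auto
    show "a[k:=y] \<in> ?S" using a kl xy len[of a] by (auto intro: upd_tidx)
  qed
  then show ?thesis by (simp add: sum.inter_filter[symmetric])
qed

lemma L2:
  fixes f :: "nat list \<Rightarrow> complex"
  assumes k: "k < r" and xy: "x < m" "y < m"
  shows "(\<Sum>c\<in>tidx r m. if c!k = y then cnj (f (c[k:=x])) * f (c[k:=x]) else 0) =
         (\<Sum>a\<in>tidx r m. if a!k = x then cnj (f a) * f a else 0)"
proof -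
  let ?S = "{c\<in>tidx r m. c!k = y}" and ?T = "{a\<in>tidx r m. a!k = x}"
  have len: "length c = r" if "c \<in> tidx r m" for c using that by (simp add: tidx_def)
  have "(\<Sum>c\<in>?S. cnj (f (c[k:=x])) * f (c[k:=x])) = (\<Sum>a\<in>?T. cnj (f a) * f a)"
  proof (rule sum.reindex_bij_witness[of ?S "\<lambda>a. a[k:=y]" "\<lambda>c. c[k:=x]"])
    fix c assume c: "c \<in> ?S"
    show "(c[k:=x])[k:=y] = c" using c list_update_id[of c k] by auto
    show "c[k:=x] \<in> ?T" using c k xy len[of c] by (auto intro: upd_tidx)
  next
    fix a assume a: "a \<in> ?T"
    show "(a[k:=y])[k:=x] = a" using a list_update_id[of a k] by auto
    show "a[k:=y] \<in> ?S" using a k xy len[of a] by (auto intro: upd_tidx)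
  qed simp
  then show ?thesis by (simp add: sum.inter_filter[symmetric])
qed


definition Gf :: "(nat list \<Rightarrow> complex) \<Rightarrow> nat \<Rightarrow> nat \<Rightarrow> nat \<Rightarrow> nat list \<Rightarrow> complex" where
  "Gf f r x y c = (\<Sum>k<r. if c!k = y then f (c[k:=x]) else 0)"

definition Ff :: "(nat list \<Rightarrow> complex) \<Rightarrow> nat \<Rightarrow> nat \<Rightarrow> complex" where
  "Ff f r m = (\<Sum>x<m. \<Sum>y<m. if y \<noteq> x then (\<Sum>c\<in>tidx r m. cnj (Gf f r x y c) * Gf f r x y c) else 0)"

lemma sum_if_neq: "x0 < m \<Longrightarrow> (\<Sum>y<m. if y \<noteq> x0 then c else 0) = of_nat (m - 1) * (c::complex)"
proof -
  assume x0: "x0 < m"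
  have "(\<Sum>y<m. if y \<noteq> x0 then c else 0) + (\<Sum>y<m. if y = x0 then c else 0) = (\<Sum>y<m. c)"
    by (simp only: sum.distrib[symmetric]) (intro sum.cong, auto)
  moreover have "(\<Sum>y<m. if y = x0 then c else 0) = c" using x0 by simp
  ultimately have "(\<Sum>y<m. if y \<noteq> x0 then c else 0) = of_nat m * c - c" by (simp add: algebra_simps)
  also have "\<dots> = of_nat (m - 1) * c" using x0 by (simp add: of_nat_diff algebra_simps)
  finally show ?thesis .
qed

lemma sum_delta2:
  fixes C :: complex and u v m :: nat
  assumes "u < m" "v < m"
  shows "(\<Sum>x<m. \<Sum>y<m. if y \<noteq> x \<and> u = x \<and> v = y then C else 0) = (if u \<noteq> v then C else 0)"
proof -
  have e: "(\<Sum>y<m. if y \<noteq> x \<and> u = x \<and> v = y then C else 0) = (if u = x \<and> v \<noteq> x then C else 0)" for x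
  proof -
    have "(\<Sum>y<m. if y \<noteq> x \<and> u = x \<and> v = y then C else 0) = (\<Sum>y<m. if v = y then (if u = x \<and> v \<noteq> x then C else 0) else 0)"
      by (intro sum.cong) auto
    also have "\<dots> = (if u = x \<and> v \<noteq> x then C else 0)"
    proof -
      have "(\<Sum>y<m. if v = y then D else 0) = D" for D :: complex
        using assms(2) by (subst sum.delta') auto
      then show ?thesis by blast
    qed
    finally show ?thesis .
  qed
  have "(\<Sum>x<m. if u = x \<and> v \<noteq> x then C else 0) = (\<Sum>x<m. if u = x then (if u \<noteq> v then C else 0) else 0)"
    by (intro sum.cong) auto
  also have "\<dots> = (if u \<noteq> v then C else 0)" using assms by simp
  finally show ?thesis by (simp add: e)
qed

lemma sum_delta1:
  fixes C :: complex and u m :: nat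
  assumes "u < m"
  shows "(\<Sum>x<m. \<Sum>y<m. if y \<noteq> x \<and> u = x then C else 0) = of_nat (m - 1) * C"
proof -
  have e: "(\<Sum>y<m. if y \<noteq> x \<and> u = x then C else 0) = (if u = x then (\<Sum>y<m. if y \<noteq> u then C else 0) else 0)" for x
    by (cases "u = x") auto
  have "(\<Sum>x<m. if u = x then (\<Sum>y<m. if y \<noteq> u then C else 0) else 0) = (\<Sum>y<m. if y \<noteq> u then C else 0)"
    using assms by simp
  also have "\<dots> = of_nat (m - 1) * C" by (rule sum_if_neq[OF assms])
  finally show ?thesis by (simp only: e)
qed

lemma F_inner:
  fixes f :: "nat list \<Rightarrow> complex"
  assumes k: "k < r" and l: "l < r"
  shows "(\<Sum>x<m. \<Sum>y<m. if y \<noteq> x then (\<Sum>c\<in>tidx r m. if c!k = y \<and> c!l = y then cnj (f (c[k:=x])) * f (c[l:=x]) else 0) else 0) =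
     (if k = l then of_nat (m - 1) * (\<Sum>a\<in>tidx r m. cnj (f a) * f a)
      else (\<Sum>a\<in>tidx r m. if a!k \<noteq> a!l then cnj (f a) * f (swp k l a) else 0))"
proof (cases "k = l")
  case True
  have "(\<Sum>x<m. \<Sum>y<m. if y \<noteq> x then (\<Sum>c\<in>tidx r m. if c!k = y \<and> c!l = y then cnj (f (c[k:=x])) * f (c[l:=x]) else 0) else 0) =
        (\<Sum>x<m. \<Sum>y<m. if y \<noteq> x then (\<Sum>a\<in>tidx r m. if a!k = x then cnj (f a) * f a else 0) else 0)"
    using True L2[OF k, of _ m _ f] by (intro sum.cong refl) auto
  also have "\<dots> = (\<Sum>x<m. \<Sum>y<m. \<Sum>a\<in>tidx r m. if y \<noteq> x \<and> a!k = x then cnj (f a) * f a else 0)"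
    by (intro sum.cong refl) (auto simp: sum.If_cases)
  also have "\<dots> = (\<Sum>a\<in>tidx r m. \<Sum>x<m. \<Sum>y<m. if y \<noteq> x \<and> a!k = x then cnj (f a) * f a else 0)"
    by (subst sum.swap, rule sum.cong[OF refl], rule sum.swap)
  also have "\<dots> = (\<Sum>a\<in>tidx r m. of_nat (m - 1) * (cnj (f a) * f a))"
    by (intro sum.cong refl sum_delta1 tidx_nth[OF _ k])
  finally show ?thesis using True by (simp add: sum_distrib_left)
next
  case False
  have "(\<Sum>x<m. \<Sum>y<m. if y \<noteq> x then (\<Sum>c\<in>tidx r m. if c!k = y \<and> c!l = y then cnj (f (c[k:=x])) * f (c[l:=x]) else 0) else 0) =
        (\<Sum>x<m. \<Sum>y<m. if y \<noteq> x then (\<Sum>a\<in>tidx r m. if a!k = x \<and> a!l = y then cnj (f a) * f (swp k l a) else 0) else 0)"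
    using False L1[OF k l False, of _ m _ f] by (intro sum.cong refl) auto
  also have "\<dots> = (\<Sum>x<m. \<Sum>y<m. \<Sum>a\<in>tidx r m. if y \<noteq> x \<and> a!k = x \<and> a!l = y then cnj (f a) * f (swp k l a) else 0)"
    by (intro sum.cong refl) (auto simp: sum.If_cases)
  also have "\<dots> = (\<Sum>a\<in>tidx r m. \<Sum>x<m. \<Sum>y<m. if y \<noteq> x \<and> a!k = x \<and> a!l = y then cnj (f a) * f (swp k l a) else 0)"
    by (subst sum.swap, rule sum.cong[OF refl], rule sum.swap)
  also have "\<dots> = (\<Sum>a\<in>tidx r m. if a!k \<noteq> a!l then cnj (f a) * f (swp k l a) else 0)"
    by (intro sum.cong refl sum_delta2 tidx_nth[OF _ k] tidx_nth[OF _ l])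
  finally show ?thesis using False by simp
qed


lemma sum_swap3: "(\<Sum>c\<in>C. \<Sum>k\<in>K. \<Sum>l\<in>L. g c k l) = (\<Sum>k\<in>K. \<Sum>l\<in>L. \<Sum>c\<in>C. g c k l)"
proof -
  have "(\<Sum>c\<in>C. \<Sum>k\<in>K. \<Sum>l\<in>L. g c k l) = (\<Sum>k\<in>K. \<Sum>c\<in>C. \<Sum>l\<in>L. g c k l)" by (rule sum.swap)
  also have "\<dots> = (\<Sum>k\<in>K. \<Sum>l\<in>L. \<Sum>c\<in>C. g c k l)" by (rule sum.cong[OF refl], rule sum.swap)
  finally show ?thesis .
qed

lemma G_sq:
  "cnj (Gf f r x y c) * Gf f r x y c =
     (\<Sum>k<r. \<Sum>l<r. if c!k = y \<and> c!l = y then cnj (f (c[k:=x])) * f (c[l:=x]) else 0)"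
  unfolding Gf_def cnj_sum sum_product by (intro sum.cong refl) auto

lemma F_id:
  fixes f :: "nat list \<Rightarrow> complex"
  shows "Ff f r m = of_nat (r * (m - 1)) * (\<Sum>a\<in>tidx r m. cnj (f a) * f a) +
     (\<Sum>k<r. \<Sum>l<r. if k \<noteq> l then (\<Sum>a\<in>tidx r m. if a!k \<noteq> a!l then cnj (f a) * f (swp k l a) else 0) else 0)"
proof -
  let ?H = "\<lambda>x y c k l. if c!k = y \<and> c!l = y then cnj (f (c[k:=x])) * f (c[l:=x]) else 0"
  let ?N2 = "\<Sum>a\<in>tidx r m. cnj (f a) * f a"
  let ?X = "\<lambda>k l. \<Sum>a\<in>tidx r m. if a!k \<noteq> a!l then cnj (f a) * f (swp k l a) else 0"
  have "Ff f r m = (\<Sum>x<m. \<Sum>y<m. \<Sum>c\<in>tidx r m. \<Sum>k<r. \<Sum>l<r. if y \<noteq> x then ?H x y c k l else 0)"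
    unfolding Ff_def G_sq by (intro sum.cong refl) (auto simp: sum.If_cases)
  also have "\<dots> = (\<Sum>x<m. \<Sum>y<m. \<Sum>k<r. \<Sum>l<r. \<Sum>c\<in>tidx r m. if y \<noteq> x then ?H x y c k l else 0)"
    by (intro sum.cong refl sum_swap3)
  also have "\<dots> = (\<Sum>x<m. \<Sum>k<r. \<Sum>l<r. \<Sum>y<m. \<Sum>c\<in>tidx r m. if y \<noteq> x then ?H x y c k l else 0)"
    by (intro sum.cong refl sum_swap3)
  also have "\<dots> = (\<Sum>k<r. \<Sum>l<r. \<Sum>x<m. \<Sum>y<m. \<Sum>c\<in>tidx r m. if y \<noteq> x then ?H x y c k l else 0)"
    by (rule sum_swap3)
  also have "\<dots> = (\<Sum>k<r. \<Sum>l<r. (if k = l then of_nat (m - 1) * ?N2 else ?X k l))"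
  proof (intro sum.cong refl)
    fix k l assume kl: "k \<in> {..<r}" "l \<in> {..<r}"
    have "(\<Sum>x<m. \<Sum>y<m. \<Sum>c\<in>tidx r m. if y \<noteq> x then ?H x y c k l else 0) =
          (\<Sum>x<m. \<Sum>y<m. if y \<noteq> x then (\<Sum>c\<in>tidx r m. ?H x y c k l) else 0)"
      by (intro sum.cong refl) auto
    also have "\<dots> = (if k = l then of_nat (m - 1) * ?N2 else ?X k l)"
      using F_inner[where f=f and m=m and k=k and l=l and r=r] kl by simp
    finally show "(\<Sum>x<m. \<Sum>y<m. \<Sum>c\<in>tidx r m. if y \<noteq> x then ?H x y c k l else 0) =
          (if k = l then of_nat (m - 1) * ?N2 else ?X k l)" .
  qed
  also have "\<dots> = (\<Sum>k<r. \<Sum>l<r. (if k = l then of_nat (m - 1) * ?N2 else 0) + (if k \<noteq> l then ?X k l else 0))"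
    by (intro sum.cong refl) auto
  also have "\<dots> = (\<Sum>k<r. of_nat (m - 1) * ?N2) + (\<Sum>k<r. \<Sum>l<r. if k \<noteq> l then ?X k l else 0)"
    by (simp add: sum.distrib)
  finally show ?thesis by simp
qed




definition Sfull :: "(nat list \<Rightarrow> complex) \<Rightarrow> nat \<Rightarrow> nat \<Rightarrow> complex" where
  "Sfull f r m = (\<Sum>k<r. \<Sum>l<r. if k \<noteq> l then (\<Sum>a\<in>tidx r m. cnj (f a) * f (swp k l a)) else 0)"

definition Ecnt :: "nat \<Rightarrow> nat list \<Rightarrow> real" where
  "Ecnt r a = (\<Sum>k<r. \<Sum>l<r. if k \<noteq> l \<and> a!k = a!l then 1 else 0)"

lemma swp_same: "a!k = a!l \<Longrightarrow> swp k l a = a"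
  unfolding swp_def by (metis list_update_id)

lemma Sfull_id:
  fixes f :: "nat list \<Rightarrow> complex"
  shows "Sfull f r m = Ff f r m - of_nat (r * (m - 1)) * (\<Sum>a\<in>tidx r m. cnj (f a) * f a)
     + (\<Sum>a\<in>tidx r m. cnj (f a) * f a * of_real (Ecnt r a))"
proof -
  have kl: "(if k \<noteq> l then (\<Sum>a\<in>tidx r m. cnj (f a) * f (swp k l a)) else 0) =
      (if k \<noteq> l then (\<Sum>a\<in>tidx r m. if a!k \<noteq> a!l then cnj (f a) * f (swp k l a) else 0) else 0)
      + (\<Sum>a\<in>tidx r m. if k \<noteq> l \<and> a!k = a!l then cnj (f a) * f a else 0)" for k l
  proof (cases "k = l")
    case True
    then show ?thesis by simp
  next
    case False
    have "(\<Sum>a\<in>tidx r m. cnj (f a) * f (swp k l a)) =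
      (\<Sum>a\<in>tidx r m. (if a!k \<noteq> a!l then cnj (f a) * f (swp k l a) else 0) + (if a!k = a!l then cnj (f a) * f a else 0))"
      by (rule sum.cong[OF refl]) (simp add: swp_same)
    then show ?thesis using False by (simp add: sum.distrib)
  qed
  have "Sfull f r m = (\<Sum>k<r. \<Sum>l<r. if k \<noteq> l then (\<Sum>a\<in>tidx r m. if a!k \<noteq> a!l then cnj (f a) * f (swp k l a) else 0) else 0)
      + (\<Sum>k<r. \<Sum>l<r. \<Sum>a\<in>tidx r m. if k \<noteq> l \<and> a!k = a!l then cnj (f a) * f a else 0)"
    unfolding Sfull_def kl by (simp only: sum.distrib)
  also have "(\<Sum>k<r. \<Sum>l<r. \<Sum>a\<in>tidx r m. if k \<noteq> l \<and> a!k = a!l then cnj (f a) * f a else 0) =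
      (\<Sum>a\<in>tidx r m. \<Sum>k<r. \<Sum>l<r. if k \<noteq> l \<and> a!k = a!l then cnj (f a) * f a else 0)"
    by (rule sum_swap3[symmetric])
  also have "\<dots> = (\<Sum>a\<in>tidx r m. cnj (f a) * f a * of_real (Ecnt r a))"
    by (intro sum.cong refl) (simp add: Ecnt_def sum_distrib_left if_distrib cong: if_cong)
  finally show ?thesis using F_id[of f r m] by (simp add: algebra_simps)
qed

lemma cnj_mult_self: "cnj z * z = of_real ((cmod z)^2)"
  using complex_norm_square[of z] by (simp add: mult.commute)

lemma Ff_real: "\<exists>R\<ge>0. Ff f r m = of_real R"
proof -
  have "Ff f r m = of_real (\<Sum>x<m. \<Sum>y<m. if y \<noteq> x then (\<Sum>c\<in>tidx r m. (cmod (Gf f r x y c))^2) else 0)"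
    unfolding Ff_def cnj_mult_self by (simp add: if_distrib cong: if_cong)
  moreover have "(\<Sum>x<m. \<Sum>y<m. if y \<noteq> x then (\<Sum>c\<in>tidx r m. (cmod (Gf f r x y c))^2) else 0) \<ge> 0"
    by (intro sum_nonneg) (auto intro: sum_nonneg)
  ultimately show ?thesis by blast
qed

lemma Ecnt_bound:
  assumes a: "a \<in> tidx r m" and rm: "m^2 < r"
  shows "Ecnt r a > real r * (real m - 1)"
proof -
  have "int r * int m < (\<Sum>k<r. \<Sum>l<r. if a!k = a!l then 1 else 0)"
    using pair_count_bound[OF _ _ rm, of a] a by (simp add: tidx_def)
  then have "real_of_int (int r * int m) < real_of_int (\<Sum>k<r. \<Sum>l<r. if a!k = a!l then 1 else 0)"
    by (simp only: of_int_less_iff)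
  moreover have "real_of_int (if P then 1 else 0) = (if P then 1 else 0)" for P by simp
  ultimately have "real r * real m < (\<Sum>k<r. \<Sum>l<r. if a!k = a!l then 1 else (0::real))"
    by (simp add: of_int_sum)
  also have "(\<Sum>k<r. \<Sum>l<r. if a!k = a!l then 1 else (0::real)) = Ecnt r a + real r"
  proof -
    have "(\<Sum>k<r. \<Sum>l<r. if a!k = a!l then 1 else (0::real)) =
        (\<Sum>k<r. \<Sum>l<r. (if k \<noteq> l \<and> a!k = a!l then 1 else 0) + (if k = l then 1 else 0))"
      by (intro sum.cong refl) auto
    also have "\<dots> = Ecnt r a + real r" by (simp add: sum.distrib Ecnt_def)
    finally show ?thesis .
  qed
  finally show ?thesis by (simp add: algebra_simps)
qed

lemma Sfull_pos:
  fixes f :: "nat list \<Rightarrow> complex"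
  assumes rm: "m^2 < r" and nz: "a0 \<in> tidx r m" "f a0 \<noteq> 0"
  shows "\<exists>R>0. Sfull f r m = of_real R"
proof -
  obtain F where F: "F \<ge> 0" "Ff f r m = of_real F" using Ff_real by blast
  define R where "R = F + (\<Sum>a\<in>tidx r m. (cmod (f a))^2 * (Ecnt r a - real r * (real m - 1)))"
  have m1: "real (r * (m - 1)) = real r * (real m - 1)" if "m > 0" using that by (simp add: of_nat_diff)
  have m0: "m > 0"
  proof (rule ccontr)
    assume "\<not> m > 0"
    then have "set a0 \<subseteq> {}" "length a0 = r" using nz(1) by (auto simp: tidx_def)
    then show False using rm \<open>\<not> m > 0\<close> by auto
  qed
  have n2: "(\<Sum>a\<in>tidx r m. cnj (f a) * f a) = of_real (\<Sum>a\<in>tidx r m. (cmod (f a))^2)"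
    by (simp add: cnj_mult_self)
  have e2: "(\<Sum>a\<in>tidx r m. cnj (f a) * f a * of_real (Ecnt r a)) = of_real (\<Sum>a\<in>tidx r m. (cmod (f a))^2 * Ecnt r a)"
    by (simp add: cnj_mult_self)
  have "Sfull f r m = of_real (F - real r * (real m - 1) * (\<Sum>a\<in>tidx r m. (cmod (f a))^2) + (\<Sum>a\<in>tidx r m. (cmod (f a))^2 * Ecnt r a))"
  proof -
    have c: "complex_of_nat (r * (m - 1)) = of_real (real r * (real m - 1))"
      using m0 by (simp add: of_nat_diff)
    show ?thesis unfolding Sfull_id F(2) n2 e2 c by simp
  qed
  also have "F - real r * (real m - 1) * (\<Sum>a\<in>tidx r m. (cmod (f a))^2) + (\<Sum>a\<in>tidx r m. (cmod (f a))^2 * Ecnt r a) = R"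
    unfolding R_def by (simp add: sum_distrib_left sum_subtractf sum.distrib algebra_simps)
  finally have "Sfull f r m = of_real R" .
  moreover have "R > 0"
  proof -
    have "(\<Sum>a\<in>tidx r m. (cmod (f a))^2 * (Ecnt r a - real r * (real m - 1))) > 0"
    proof (rule sum_pos2[OF finite_tidx nz(1)])
      show "0 < (cmod (f a0))^2 * (Ecnt r a0 - real r * (real m - 1))"
        using nz Ecnt_bound[OF nz(1) rm] by simp
      show "\<And>i. i \<in> tidx r m \<Longrightarrow> 0 \<le> (cmod (f i))^2 * (Ecnt r i - real r * (real m - 1))"
        using Ecnt_bound[OF _ rm] by (simp add: less_imp_le)
    qed
    then show ?thesis using F(1) R_def by simp
  qed
  ultimately show ?thesis by blast
qed




lemma swp_tidx: "a \<in> tidx r m \<Longrightarrow> k < r \<Longrightarrow> l < r \<Longrightarrow> swp k l a \<in> tidx r m"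
  unfolding tidx_def swp_def by (auto simp: set_swap)

lemma swp_invol: "k < length b \<Longrightarrow> l < length b \<Longrightarrow> swp k l (swp k l b) = b"
  unfolding swp_def by (cases "k = l") (auto simp: nth_list_update intro!: nth_equalityI)

lemma swp_comm: "swp k l b = swp l k b"
  unfolding swp_def by (cases "k = l") (auto simp: list_update_swap)

lemma Pm_swp_apply:
  assumes a: "a \<in> tidx r m" and kl: "k < r" "l < r"
  shows "(\<Sum>b\<in>tidx r m. Pm r m (swp k l) a b * f b) = (f (swp k l a) :: complex)"
proof -
  have "(\<Sum>b\<in>tidx r m. Pm r m (swp k l) a b * f b) = (\<Sum>b\<in>tidx r m. if b = swp k l a then f b else 0)"
  proof (intro sum.cong refl)
    fix b assume b: "b \<in> tidx r m"
    have lb: "length b = r" "length a = r" using a b by (auto simp: tidx_def)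
    have "(a = swp k l b) = (b = swp k l a)"
      using swp_invol[of k b l] swp_invol[of k a l] lb kl by metis
    then show "Pm r m (swp k l) a b * f b = (if b = swp k l a then f b else 0)"
      using a b by (simp add: Pm_def)
  qed
  also have "\<dots> = f (swp k l a)" using swp_tidx[OF a kl] by simp
  finally show ?thesis .
qed

lemma Msw_apply:
  assumes a: "a \<in> tidx r m"
  shows "(\<Sum>b\<in>tidx r m. Msw r m a b * f b) = (\<Sum>p\<in>set (prs r). (f (swp (fst p) (snd p) a) :: complex))"
proof -
  have "(\<Sum>b\<in>tidx r m. Msw r m a b * f b) = (\<Sum>b\<in>tidx r m. \<Sum>p\<in>set (prs r). Pm r m (swp (fst p) (snd p)) a b * f b)"
    by (simp add: Msw_def sum_distrib_right)
  also have "\<dots> = (\<Sum>p\<in>set (prs r). \<Sum>b\<in>tidx r m. Pm r m (swp (fst p) (snd p)) a b * f b)"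
    by (rule sum.swap)
  also have "\<dots> = (\<Sum>p\<in>set (prs r). f (swp (fst p) (snd p) a))"
    by (intro sum.cong refl Pm_swp_apply[OF a]) (auto simp: set_prs)
  finally show ?thesis .
qed

lemma Sfull_half:
  fixes f :: "nat list \<Rightarrow> complex"
  shows "Sfull f r m = 2 * (\<Sum>p\<in>set (prs r). \<Sum>a\<in>tidx r m. cnj (f a) * f (swp (fst p) (snd p) a))"
proof -
  define T where "T k l = (\<Sum>a\<in>tidx r m. cnj (f a) * f (swp k l a))" for k l
  have Tc: "T k l = T l k" for k l by (simp add: T_def swp_comm)
  have "Sfull f r m = (\<Sum>k<r. \<Sum>l<r. (if k < l then T k l else 0) + (if l < k then T k l else 0))"
    unfolding Sfull_def T_def[symmetric] by (intro sum.cong refl) auto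
  also have "\<dots> = (\<Sum>k<r. \<Sum>l<r. if k < l then T k l else 0) + (\<Sum>k<r. \<Sum>l<r. if l < k then T l k else 0)"
    by (simp add: sum.distrib, intro sum.cong refl, simp add: Tc)
  also have "(\<Sum>k<r. \<Sum>l<r. if l < k then T l k else 0) = (\<Sum>l<r. \<Sum>k<r. if l < k then T l k else 0)"
    by (rule sum.swap)
  also have "(\<Sum>k<r. \<Sum>l<r. if k < l then T k l else 0) = (\<Sum>p\<in>set (prs r). T (fst p) (snd p))"
  proof -
    have "(\<Sum>k<r. \<Sum>l<r. if k < l then T k l else 0) = (\<Sum>p\<in>{..<r} \<times> {..<r}. if fst p < snd p then T (fst p) (snd p) else 0)"
      by (simp add: sum.cartesian_product case_prod_beta)
    also have "\<dots> = (\<Sum>p\<in>{p\<in>{..<r} \<times> {..<r}. fst p < snd p}. T (fst p) (snd p))"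
      by (simp add: sum.inter_filter)
    also have "{p\<in>{..<r} \<times> {..<r}. fst p < snd p} = set (prs r)"
      by (auto simp: set_prs)
    finally show ?thesis .
  qed
  finally show ?thesis by (simp add: T_def)
qed

lemma Msw_pos:
  assumes rm: "m^2 < r" and ev: "eigenvalue (toM r m (Msw r m) :: complex mat) \<mu>"
  shows "Re \<mu> > 0"
proof -
  let ?N = "NN r m" and ?A = "toM r m (Msw r m) :: complex mat"
  from ev obtain v where v: "v \<in> carrier_vec ?N" "v \<noteq> 0\<^sub>v ?N" "?A *\<^sub>v v = \<mu> \<cdot>\<^sub>v v"
    unfolding eigenvalue_def eigenvector_def by auto
  define f where "f b = (\<Sum>i<?N. if Lst r m ! i = b then v $ i else 0)" for b
  have fL: "f (Lst r m ! j) = v $ j" if "j < ?N" for j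
  proof -
    have "f (Lst r m ! j) = (\<Sum>i<?N. if i = j then v $ i else 0)"
      unfolding f_def by (intro sum.cong refl) (use that Lst_inj in auto)
    then show ?thesis using that by simp
  qed
  obtain j where j: "j < ?N" "v $ j \<noteq> 0"
    using v(1,2) by (metis carrier_vecD eq_vecI index_zero_vec(1) index_zero_vec(2))
  define a0 where "a0 = Lst r m ! j"
  have a0: "a0 \<in> tidx r m" "f a0 \<noteq> 0" using j fL Lst_in by (auto simp: a0_def)
  have eig: "(\<Sum>p\<in>set (prs r). f (swp (fst p) (snd p) a)) = \<mu> * f a" if a: "a \<in> tidx r m" for a
  proof -
    obtain i where i: "i < ?N" "Lst r m ! i = a" using tidx_ex[OF a] by blast
    have "(?A *\<^sub>v v) $ i = (\<Sum>k<?N. Msw r m a (Lst r m ! k) * f (Lst r m ! k))"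
      using v(1) i by (simp add: scalar_prod_def fL lessThan_atLeast0)
    also have "\<dots> = (\<Sum>b\<in>tidx r m. Msw r m a b * f b)" by (simp add: sum_tidx)
    also have "\<dots> = (\<Sum>p\<in>set (prs r). f (swp (fst p) (snd p) a))" by (rule Msw_apply[OF a])
    finally have "(\<Sum>p\<in>set (prs r). f (swp (fst p) (snd p) a)) = (?A *\<^sub>v v) $ i" ..
    also have "\<dots> = \<mu> * v $ i" using v(1,3) i by simp
    finally show ?thesis using fL[OF i(1)] i(2) by simp
  qed
  have "(\<Sum>a\<in>tidx r m. cnj (f a) * (\<Sum>p\<in>set (prs r). f (swp (fst p) (snd p) a))) =
        (\<Sum>a\<in>tidx r m. \<mu> * (cnj (f a) * f a))"
    by (intro sum.cong refl) (simp add: eig)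
  moreover have "(\<Sum>a\<in>tidx r m. cnj (f a) * (\<Sum>p\<in>set (prs r). f (swp (fst p) (snd p) a))) =
        (\<Sum>p\<in>set (prs r). \<Sum>a\<in>tidx r m. cnj (f a) * f (swp (fst p) (snd p) a))"
    by (simp add: sum_distrib_left sum.swap[of _ "tidx r m"])
  ultimately have e1: "(\<Sum>p\<in>set (prs r). \<Sum>a\<in>tidx r m. cnj (f a) * f (swp (fst p) (snd p) a)) =
      \<mu> * (\<Sum>a\<in>tidx r m. cnj (f a) * f a)"
    by (simp add: sum_distrib_left)
  have e: "Sfull f r m = 2 * \<mu> * (\<Sum>a\<in>tidx r m. cnj (f a) * f a)"
    by (simp only: Sfull_half e1 mult.assoc)
  obtain R where R: "R > 0" "Sfull f r m = of_real R" using Sfull_pos[where f=f, OF rm a0] by blast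
  define n2 where "n2 = (\<Sum>a\<in>tidx r m. (cmod (f a))^2)"
  have n2: "(\<Sum>a\<in>tidx r m. cnj (f a) * f a) = of_real n2" by (simp add: n2_def cnj_mult_self)
  have n2p: "n2 > 0" unfolding n2_def
    by (rule sum_pos2[OF finite_tidx a0(1)]) (use a0 in auto)
  have "\<mu> = of_real (R / (2 * n2))" using e R n2 n2p by (simp add: field_simps)
  then show ?thesis using R n2p by simp
qed


theorem corollary6p2:
  fixes q :: "'k::field_char_0" and r m :: nat
  assumes "is_alg_closure_of_Qq q"
    and "r \<ge> 2"
    and "m ^ 2 < r"
  shows "A_q r m q = C_q r m q \<and> End_comm r m (C_q r m q) = End_comm r m (A_q r m q)"
proof -
  have tr: "transcendental_over_Q q" using assms(1) by (simp add: is_alg_closure_of_Qq_def)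
  have q0: "q \<noteq> 0"
    using tr[unfolded transcendental_over_Q_def, rule_format, of "[:0,1:]"] by simp
  let ?N = "NN r m"
  define D where "D = det (peval (char_poly (toM r m (ZM r m (Tgp r m [:0,1::rat:])))) (toM r m (ZM r m (Tp r m [:0,1::rat:]))))"
  have hc: "comm_ring_hom (\<lambda>p::rat poly. poly (map_poly (of_rat :: rat \<Rightarrow> complex) p) 1)" by (rule eval_hom)
  have hk: "comm_ring_hom (\<lambda>p::rat poly. poly (map_poly (of_rat :: rat \<Rightarrow> 'k) p) q)" by (rule eval_hom)
  have "poly (map_poly (of_rat :: rat \<Rightarrow> complex) D) 1 =
      det (peval (char_poly (toM r m (ZM r m (Tgp r m (1::complex))))) (toM r m (ZM r m (Tp r m (1::complex)))))"
    using det_hom_transfer[OF hc, of r m "[:0,1:]"] by (simp add: D_def)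
  also have "toM r m (ZM r m (Tgp r m (1::complex))) = - toM r m (Msw r m)"
    by (simp add: ZMg_one, intro eq_matI) auto
  also have "toM r m (ZM r m (Tp r m (1::complex))) = toM r m (Msw r m)"
    by (simp add: ZM_one)
  finally have "poly (map_poly (of_rat :: rat \<Rightarrow> complex) D) 1 \<noteq> 0"
    using det_char_neg_nonzero[OF toM_carrier Msw_pos[OF assms(3)]] by simp
  then have "D \<noteq> 0" by auto
  then have "poly (map_poly (of_rat :: rat \<Rightarrow> 'k) D) q \<noteq> 0" using tr by (simp add: transcendental_over_Q_def)
  also have "poly (map_poly (of_rat :: rat \<Rightarrow> 'k) D) q =
      det (peval (char_poly (toM r m (ZM r m (Tgp r m q)))) (toM r m (ZM r m (Tp r m q))))"
    using det_hom_transfer[OF hk, of r m "[:0,1:]"] by (simp add: D_def)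
  finally have detne: "det (peval (char_poly (toM r m (ZM r m (Tgp r m q)))) (toM r m (ZM r m (Tp r m q)))) \<noteq> 0" .
  define Z where "Z = Zq q r"
  define Am where "Am = toM r m (pi_r r m q Z)"
  define Bm where "Bm = toM r m (pi_r r m q (goldman r q Z))"
  have Am: "Am = toM r m (ZM r m (Tp r m q))" by (simp add: Am_def Z_def pi_Zq[OF q0])
  have Bm: "Bm = toM r m (ZM r m (Tgp r m q))" by (simp add: Bm_def Z_def pi_gZq[OF q0])
  define W where "W = peval (char_poly Bm) Am"
  have Wc: "W \<in> carrier_mat ?N ?N" by (simp add: W_def Am_def)
  obtain s where s: "W * peval s W = 1\<^sub>m ?N"
    using peval_inverse[OF Wc] detne Am Bm W_def by auto
  define E where "E = HMul (hpoly (char_poly Bm) Z) (hpoly s (hpoly (char_poly Bm) Z))"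
  have "toM r m (pi_r r m q E) = W * peval s W"
    by (simp add: E_def toM_tmul toM_pi_hpoly W_def Am_def)
  then have "toM r m (pi_r r m q E) = toM r m (tid r m)" using s by (simp add: toM_tid)
  then have piE: "pi_r r m q E = tid r m" by (rule toM_inj[OF pi_supp tid_supp])
  have "toM r m (pi_r r m q (goldman r q E)) = peval (char_poly Bm) Bm * peval s (peval (char_poly Bm) Bm)"
    by (simp add: E_def toM_tmul toM_pi_hpoly goldman_hpoly Bm_def)
  also have "\<dots> = 0\<^sub>m ?N ?N" using cayley_hamilton[of Bm ?N] by (simp add: Bm_def)
  finally have "toM r m (pi_r r m q (goldman r q E)) = toM r m (\<lambda>a b. 0)" by (simp add: toM_zero)
  then have pigE: "pi_r r m q (goldman r q E) = (\<lambda>a b. 0)" by (rule toM_inj[OF pi_supp zero_supp])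
  have AC: "A_q r m q \<subseteq> C_q r m q"
  proof
    fix F assume "F \<in> A_q r m q"
    then obtain X where X: "F = pi_r r m q X" by (auto simp: A_q_def)
    define Y where "Y = HAdd (HMul E X) (HMul (goldman r q E) (goldman r q X))"
    have "pi_r r m q Y = pi_r r m q X"
      by (simp add: Y_def piE pigE tmul_tid_left[OF pi_supp] tmul_zero_left)
    moreover have "heq r q (goldman r q Y) Y"
    proof -
      have "heq r q (goldman r q Y) (HAdd (HMul (goldman r q E) (goldman r q X)) (HMul E X))"
        by (simp add: Y_def heq.h_add_cong heq.h_mul_cong heq_gg heq.h_refl)
      then show ?thesis unfolding Y_def by (meson heq.h_add_comm heq.h_trans)
    qed
    ultimately show "F \<in> C_q r m q" unfolding C_q_def X by (metis (mono_tags) image_eqI mem_Collect_eq)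
  qed
  have "C_q r m q \<subseteq> A_q r m q" by (auto simp: A_q_def C_q_def)
  with AC have "A_q r m q = C_q r m q" by auto
  then show ?thesis by simp
qed

end
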